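(* If $G$ is a non-abelian finite group, then $\mathrm{am}(\mathrm{ZL}^1(G))>1$.
   Context: $\mathrm{L}^1(G)$ is the convolution algebra of $G$ with normalised Haar measure $\int_G f=\frac1{|G|}\sum_{s\in G}f(s)$, and $\mathrm{ZL}^1(G)$ its centre. For a Banach algebra $\mathfrak{A}$, $\mathrm{am}(\mathfrak{A})$ is the infimum of $\sup_\alpha\|\mu_\alpha\|$ over bounded approximate diagonals, i.e. bounded nets $(\mu_\alpha)$ in $\mathfrak{A}\hat\otimes\mathfrak{A}$ with $m(\mu_\alpha)a\to a$, $a\,m(\mu_\alpha)\to a$, $a\cdot\mu_\alpha-\mu_\alpha\cdot a\to0$ for all $a$ ($m$ multiplication, $a\cdot(b\otimes c)=ab\otimes c$, $(b\otimes c)\cdot a=b\otimes ca$). *)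

theory Defs
  imports "HOL-Analysis.Analysis" "HOL-Algebra.Group"
begin

text \<open>Elements of L1(G) are functions on the carrier, taken to be zero outside it.
  Haar measure is normalised: the integral is (1/|G|) times the sum.\<close>

definition l1norm :: "('a, 'b) monoid_scheme \<Rightarrow> ('a \<Rightarrow> complex) \<Rightarrow> real" where
  "l1norm G f = (\<Sum>s\<in>carrier G. cmod (f s)) / real (card (carrier G))"

definition conv :: "('a, 'b) monoid_scheme \<Rightarrow> ('a \<Rightarrow> complex) \<Rightarrow> ('a \<Rightarrow> complex) \<Rightarrow> 'a \<Rightarrow> complex" where
  "conv G f g = (\<lambda>t. if t \<in> carrier G
      then (\<Sum>s\<in>carrier G. f s * g (inv\<^bsub>G\<^esub> s \<otimes>\<^bsub>G\<^esub> t)) / of_nat (card (carrier G))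
      else 0)"

text \<open>The centre ZL1(G): class functions.\<close>
definition ZL1 :: "('a, 'b) monoid_scheme \<Rightarrow> ('a \<Rightarrow> complex) set" where
  "ZL1 G = {f. (\<forall>x. x \<notin> carrier G \<longrightarrow> f x = 0) \<and>
      (\<forall>x\<in>carrier G. \<forall>y\<in>carrier G. f (y \<otimes>\<^bsub>G\<^esub> x \<otimes>\<^bsub>G\<^esub> inv\<^bsub>G\<^esub> y) = f x)}"

text \<open>Elements of ZL1(G) (x) ZL1(G) are represented as functions on G x G;
  a representation of F is a finite list of pairs (a_i, b_i) in ZL1 with F = sum a_i (x) b_i.\<close>
definition tens_reps :: "('a, 'b) monoid_scheme \<Rightarrow> ('a \<times> 'a \<Rightarrow> complex)
    \<Rightarrow> (('a \<Rightarrow> complex) \<times> ('a \<Rightarrow> complex)) list set" where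
  "tens_reps G F = {ps. set ps \<subseteq> ZL1 G \<times> ZL1 G \<and>
      (\<forall>x y. F (x, y) = sum_list (map (\<lambda>(a, b). a x * b y) ps))}"

definition ZL1_tens :: "('a, 'b) monoid_scheme \<Rightarrow> ('a \<times> 'a \<Rightarrow> complex) set" where
  "ZL1_tens G = {F. tens_reps G F \<noteq> {}}"

definition projnorm :: "('a, 'b) monoid_scheme \<Rightarrow> ('a \<times> 'a \<Rightarrow> complex) \<Rightarrow> real" where
  "projnorm G F = Inf {sum_list (map (\<lambda>(a, b). l1norm G a * l1norm G b) ps) | ps. ps \<in> tens_reps G F}"

text \<open>Multiplication map m(b (x) c) = b * c.\<close>
definition mtens :: "('a, 'b) monoid_scheme \<Rightarrow> ('a \<times> 'a \<Rightarrow> complex) \<Rightarrow> 'a \<Rightarrow> complex" where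
  "mtens G F = (\<lambda>t. if t \<in> carrier G
      then (\<Sum>s\<in>carrier G. F (s, inv\<^bsub>G\<^esub> s \<otimes>\<^bsub>G\<^esub> t)) / of_nat (card (carrier G))
      else 0)"

definition lact :: "('a, 'b) monoid_scheme \<Rightarrow> ('a \<Rightarrow> complex) \<Rightarrow> ('a \<times> 'a \<Rightarrow> complex) \<Rightarrow> 'a \<times> 'a \<Rightarrow> complex" where
  "lact G a F = (\<lambda>(x, y). conv G a (\<lambda>x'. F (x', y)) x)"

definition ract :: "('a, 'b) monoid_scheme \<Rightarrow> ('a \<times> 'a \<Rightarrow> complex) \<Rightarrow> ('a \<Rightarrow> complex) \<Rightarrow> 'a \<times> 'a \<Rightarrow> complex" where
  "ract G F a = (\<lambda>(x, y). conv G (\<lambda>y'. F (x, y')) a y)"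

text \<open>Bounded approximate diagonal with bound C: a net in ZL1 (x) ZL1, encoded as a
  proper filter on the tensor space (the filter image of the net), eventually bounded by C.\<close>
definition bdd_approx_diag :: "('a, 'b) monoid_scheme \<Rightarrow> ('a \<times> 'a \<Rightarrow> complex) filter \<Rightarrow> real \<Rightarrow> bool" where
  "bdd_approx_diag G F C \<longleftrightarrow> F \<noteq> bot \<and>
     (\<forall>\<^sub>F \<mu> in F. \<mu> \<in> ZL1_tens G \<and> projnorm G \<mu> \<le> C) \<and>
     (\<forall>a\<in>ZL1 G.
        ((\<lambda>\<mu>. l1norm G (\<lambda>t. conv G (mtens G \<mu>) a t - a t)) \<longlongrightarrow> 0) F \<and>
        ((\<lambda>\<mu>. l1norm G (\<lambda>t. conv G a (mtens G \<mu>) t - a t)) \<longlongrightarrow> 0) F \<and>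
        ((\<lambda>\<mu>. projnorm G (\<lambda>z. lact G a \<mu> z - ract G \<mu> a z)) \<longlongrightarrow> 0) F)"

definition am_ZL1 :: "('a, 'b) monoid_scheme \<Rightarrow> real" where
  "am_ZL1 G = Inf {C. \<exists>F. bdd_approx_diag G F C}"

end

theory Submission
  imports Defs "HOL-Library.Function_Algebras"
begin

definition acl :: "('a, 'b) monoid_scheme \<Rightarrow> 'a \<Rightarrow> 'a \<Rightarrow> complex" where
  "acl G c s = (if s \<in> carrier G then (\<Sum>g\<in>carrier G. if g \<otimes>\<^bsub>G\<^esub> c \<otimes>\<^bsub>G\<^esub> inv\<^bsub>G\<^esub> g = s then 1 else 0) else 0)"

definition Pop :: "('a, 'b) monoid_scheme \<Rightarrow> ('a \<Rightarrow> complex) \<Rightarrow> 'a \<times> 'a \<Rightarrow> complex" where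
  "Pop G h = (\<lambda>(x, y). if x \<in> carrier G \<and> y \<in> carrier G then
     (\<Sum>g\<in>carrier G. h (g \<otimes>\<^bsub>G\<^esub> y \<otimes>\<^bsub>G\<^esub> inv\<^bsub>G\<^esub> g \<otimes>\<^bsub>G\<^esub> x)) / of_nat (card (carrier G)) else 0)"

definition Zop :: "('a, 'b) monoid_scheme \<Rightarrow> ('a \<Rightarrow> complex) \<Rightarrow> 'a \<Rightarrow> complex" where
  "Zop G h = mtens G (Pop G h)"

definition uG :: "('a, 'b) monoid_scheme \<Rightarrow> 'a \<Rightarrow> complex" where
  "uG G = (\<lambda>t. if t = \<one>\<^bsub>G\<^esub> then of_nat (card (carrier G)) else 0)"

definition Tf :: "('a, 'b) monoid_scheme \<Rightarrow> ('a \<times> 'a \<Rightarrow> complex) \<Rightarrow> complex" where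
  "Tf G \<mu> = (\<Sum>x\<in>carrier G. \<Sum>y\<in>carrier G.
      if (\<exists>k\<in>carrier G. k \<otimes>\<^bsub>G\<^esub> inv\<^bsub>G\<^esub> x \<otimes>\<^bsub>G\<^esub> inv\<^bsub>G\<^esub> k = y) then \<mu> (x, y) else 0)
      / (of_nat (card (carrier G)))^2"

lemma if01_mult [simp]: "(if P then 1 else 0) * (a::complex) = (if P then a else 0)"
  by simp

lemma sum_bij_self:
  assumes "\<And>x. x \<in> A \<Longrightarrow> h x \<in> A" "\<And>x. x \<in> A \<Longrightarrow> k x \<in> A"
    "\<And>x. x \<in> A \<Longrightarrow> k (h x) = x" "\<And>x. x \<in> A \<Longrightarrow> h (k x) = x"
  shows "(\<Sum>x\<in>A. f (h x)) = (\<Sum>x\<in>A. f x)"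
  by (rule sum.reindex_bij_witness[of _ k h]) (use assms in auto)

locale fgrp = group G for G :: "('a, 'b) monoid_scheme" (structure) +
  assumes fin: "finite (carrier G)"
begin

abbreviation "n \<equiv> card (carrier G)"

lemma n_pos: "n > 0"
  using fin one_closed by (auto simp: card_gt_0_iff)

lemma nC_nz: "(of_nat n :: complex) \<noteq> 0"
  using n_pos by simp

lemma cancel1 [simp]: "a \<in> carrier G \<Longrightarrow> b \<in> carrier G \<Longrightarrow> inv a \<otimes> (a \<otimes> b) = b"
  by (simp add: m_assoc[symmetric])
lemma cancel2 [simp]: "a \<in> carrier G \<Longrightarrow> b \<in> carrier G \<Longrightarrow> a \<otimes> (inv a \<otimes> b) = b"
  by (simp add: m_assoc[symmetric])

lemmas gs = m_assoc inv_mult_group inv_inv cancel1 cancel2 l_inv r_inv l_one r_one inv_closed m_closed one_closed inv_one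

lemma sum_lmult: "a \<in> carrier G \<Longrightarrow> (\<Sum>x\<in>carrier G. f (a \<otimes> x)) = (\<Sum>x\<in>carrier G. f x)"
  by (rule sum_bij_self[where k="\<lambda>x. inv a \<otimes> x"]) (auto simp: gs)
lemma sum_rmult: "a \<in> carrier G \<Longrightarrow> (\<Sum>x\<in>carrier G. f (x \<otimes> a)) = (\<Sum>x\<in>carrier G. f x)"
  by (rule sum_bij_self[where k="\<lambda>x. x \<otimes> inv a"]) (auto simp: gs)
lemma sum_inv: "(\<Sum>x\<in>carrier G. f (inv x)) = (\<Sum>x\<in>carrier G. f x)"
  by (rule sum_bij_self[where k="\<lambda>x. inv x"]) (auto simp: gs)

lemma ZL1_zero: "f \<in> ZL1 G \<Longrightarrow> x \<notin> carrier G \<Longrightarrow> f x = 0"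
  by (auto simp: ZL1_def)
lemma ZL1_conj: "f \<in> ZL1 G \<Longrightarrow> x \<in> carrier G \<Longrightarrow> y \<in> carrier G \<Longrightarrow> f (y \<otimes> x \<otimes> inv y) = f x"
  by (auto simp: ZL1_def)
lemma ZL1_rot: assumes "f \<in> ZL1 G" "p \<in> carrier G" "q \<in> carrier G"
  shows "f (p \<otimes> q) = f (q \<otimes> p)"
proof -
  have "f (p \<otimes> (q \<otimes> p) \<otimes> inv p) = f (q \<otimes> p)" using assms by (intro ZL1_conj) auto
  moreover have "p \<otimes> (q \<otimes> p) \<otimes> inv p = p \<otimes> q" using assms by (simp add: gs)
  ultimately show ?thesis by simp
qed

lemma acl_fiber: assumes "c \<in> carrier G"
  shows "(\<Sum>s\<in>carrier G. acl G c s * F s) = (\<Sum>g\<in>carrier G. F (g \<otimes> c \<otimes> inv g))"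
proof -
  have "(\<Sum>s\<in>carrier G. acl G c s * F s)
      = (\<Sum>s\<in>carrier G. \<Sum>g\<in>carrier G. if g \<otimes> c \<otimes> inv g = s then F s else 0)"
    by (simp add: acl_def sum_distrib_right)
  also have "\<dots> = (\<Sum>g\<in>carrier G. \<Sum>s\<in>carrier G. if g \<otimes> c \<otimes> inv g = s then F s else 0)"
    by (rule sum.swap)
  also have "\<dots> = (\<Sum>g\<in>carrier G. F (g \<otimes> c \<otimes> inv g))"
    using assms fin by (intro sum.cong refl) (simp add: sum.delta)
  finally show ?thesis .
qed

lemma class_expand: assumes "f \<in> ZL1 G" "x \<in> carrier G"
  shows "(\<Sum>c\<in>carrier G. acl G c x * f c) = of_nat n * f x"
proof -
  have "(\<Sum>c\<in>carrier G. acl G c x * f c)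
      = (\<Sum>c\<in>carrier G. \<Sum>g\<in>carrier G. if g \<otimes> c \<otimes> inv g = x then f c else 0)"
    using assms by (simp add: acl_def sum_distrib_right)
  also have "\<dots> = (\<Sum>g\<in>carrier G. \<Sum>c\<in>carrier G. if g \<otimes> c \<otimes> inv g = x then f c else 0)"
    by (rule sum.swap)
  also have "\<dots> = (\<Sum>g\<in>carrier G. \<Sum>c\<in>carrier G. if c = inv g \<otimes> x \<otimes> g then f c else 0)"
  proof (intro sum.cong refl)
    fix g c assume g: "g \<in> carrier G" and c: "c \<in> carrier G"
    have "(g \<otimes> c \<otimes> inv g = x) = (c = inv g \<otimes> x \<otimes> g)"
    proof
      assume "g \<otimes> c \<otimes> inv g = x" then have "inv g \<otimes> (g \<otimes> c \<otimes> inv g) \<otimes> g = inv g \<otimes> x \<otimes> g" by simp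
      then show "c = inv g \<otimes> x \<otimes> g" using g c by (simp add: gs)
    next
      assume "c = inv g \<otimes> x \<otimes> g" then show "g \<otimes> c \<otimes> inv g = x" using g assms by (simp add: gs)
    qed
    then show "(if g \<otimes> c \<otimes> inv g = x then f c else 0) = (if c = inv g \<otimes> x \<otimes> g then f c else 0)" by simp
  qed
  also have "\<dots> = (\<Sum>g\<in>carrier G. f (inv g \<otimes> x \<otimes> g))"
    using assms fin by (intro sum.cong refl) (simp add: sum.delta')
  also have "\<dots> = (\<Sum>g\<in>carrier G. f x)"
  proof (intro sum.cong refl)
    fix g assume g: "g \<in> carrier G"
    have "f (inv g \<otimes> x \<otimes> inv (inv g)) = f x" using assms g by (intro ZL1_conj) auto
    then show "f (inv g \<otimes> x \<otimes> g) = f x" using g by simp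
  qed
  finally show ?thesis by simp
qed

end

context fgrp begin

lemma tr_eval: assumes "ps \<in> tens_reps G \<mu>"
  shows "\<mu> (x, y) = (\<Sum>i<length ps. fst (ps!i) x * snd (ps!i) y)"
proof -
  have "\<mu> (x, y) = sum_list (map (\<lambda>(a, b). a x * b y) ps)" using assms by (simp add: tens_reps_def)
  also have "\<dots> = (\<Sum>i<length ps. fst (ps!i) x * snd (ps!i) y)"
    by (simp add: sum_list_sum_nth atLeast0LessThan case_prod_unfold)
  finally show ?thesis .
qed

lemma tr_mem: assumes "ps \<in> tens_reps G \<mu>" "i < length ps"
  shows "fst (ps!i) \<in> ZL1 G" "snd (ps!i) \<in> ZL1 G"
proof -
  have "ps!i \<in> set ps" using assms by simp
  then have "ps!i \<in> ZL1 G \<times> ZL1 G" using assms by (auto simp: tens_reps_def)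
  then show "fst (ps!i) \<in> ZL1 G" "snd (ps!i) \<in> ZL1 G" by auto
qed

lemma tens_obtain: assumes "\<mu> \<in> ZL1_tens G" obtains ps where "ps \<in> tens_reps G \<mu>"
  using assms by (auto simp: ZL1_tens_def)

lemma tens_zero: assumes "\<mu> \<in> ZL1_tens G" "x \<notin> carrier G \<or> y \<notin> carrier G"
  shows "\<mu> (x, y) = 0"
proof -
  obtain ps where ps: "ps \<in> tens_reps G \<mu>" using assms tens_obtain by blast
  show ?thesis unfolding tr_eval[OF ps]
    using assms tr_mem[OF ps] by (intro sum.neutral) (auto simp: ZL1_zero)
qed

lemma tens_slice1: assumes "\<mu> \<in> ZL1_tens G" shows "(\<lambda>t. \<mu> (t, y)) \<in> ZL1 G"
proof -
  obtain ps where ps: "ps \<in> tens_reps G \<mu>" using assms tens_obtain by blast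
  show ?thesis unfolding tr_eval[OF ps] ZL1_def
    using tr_mem[OF ps] by (auto simp: ZL1_zero ZL1_conj intro!: sum.neutral sum.cong)
qed

lemma tens_slice2: assumes "\<mu> \<in> ZL1_tens G" shows "(\<lambda>t. \<mu> (x, t)) \<in> ZL1 G"
proof -
  obtain ps where ps: "ps \<in> tens_reps G \<mu>" using assms tens_obtain by blast
  show ?thesis unfolding tr_eval[OF ps] ZL1_def
    using tr_mem[OF ps] by (auto simp: ZL1_zero ZL1_conj intro!: sum.neutral sum.cong)
qed

lemma l1norm_sum: "(\<Sum>s\<in>carrier G. cmod (f s)) = real n * l1norm G f"
  using n_pos by (simp add: l1norm_def)

lemma l1norm_nonneg: "l1norm G f \<ge> 0"
  by (simp add: l1norm_def sum_nonneg)

lemma rep_bound: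
  assumes ps: "ps \<in> tens_reps G \<mu>" and phi: "\<And>x y. cmod (\<phi> x y) \<le> 1"
  shows "cmod ((\<Sum>x\<in>carrier G. \<Sum>y\<in>carrier G. \<phi> x y * \<mu> (x, y)) / (of_nat n)^2)
     \<le> sum_list (map (\<lambda>(a, b). l1norm G a * l1norm G b) ps)"
proof -
  have eq: "(\<Sum>x\<in>carrier G. \<Sum>y\<in>carrier G. \<phi> x y * \<mu> (x, y))
     = (\<Sum>i<length ps. \<Sum>x\<in>carrier G. \<Sum>y\<in>carrier G. \<phi> x y * (fst (ps!i) x * snd (ps!i) y))"
    unfolding tr_eval[OF ps] sum_distrib_left
    by (simp add: sum.swap[of _ "{..<length ps}"])
  have "cmod (\<Sum>i<length ps. \<Sum>x\<in>carrier G. \<Sum>y\<in>carrier G. \<phi> x y * (fst (ps!i) x * snd (ps!i) y))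
     \<le> (\<Sum>i<length ps. \<Sum>x\<in>carrier G. \<Sum>y\<in>carrier G. cmod (fst (ps!i) x) * cmod (snd (ps!i) y))"
  proof -
    have "cmod (\<Sum>i<length ps. \<Sum>x\<in>carrier G. \<Sum>y\<in>carrier G. \<phi> x y * (fst (ps!i) x * snd (ps!i) y))
      \<le> (\<Sum>i<length ps. \<Sum>x\<in>carrier G. \<Sum>y\<in>carrier G. cmod (\<phi> x y * (fst (ps!i) x * snd (ps!i) y)))"
      by (rule order_trans[OF norm_sum sum_mono], rule order_trans[OF norm_sum sum_mono], rule norm_sum)
    also have "\<dots> \<le> (\<Sum>i<length ps. \<Sum>x\<in>carrier G. \<Sum>y\<in>carrier G. cmod (fst (ps!i) x) * cmod (snd (ps!i) y))"
      by (intro sum_mono) (auto simp: norm_mult intro!: mult_left_le_one_le phi mult_nonneg_nonneg)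
    finally show ?thesis .
  qed
  also have "\<dots> = (\<Sum>i<length ps. (real n * l1norm G (fst (ps!i))) * (real n * l1norm G (snd (ps!i))))"
    by (simp add: l1norm_sum[symmetric] sum_product)
  also have "\<dots> = (real n)^2 * sum_list (map (\<lambda>(a, b). l1norm G a * l1norm G b) ps)"
    by (simp add: sum_list_sum_nth atLeast0LessThan case_prod_unfold sum_distrib_left power2_eq_square
        mult_ac)
  finally have "cmod (\<Sum>x\<in>carrier G. \<Sum>y\<in>carrier G. \<phi> x y * \<mu> (x, y))
     \<le> (real n)^2 * sum_list (map (\<lambda>(a, b). l1norm G a * l1norm G b) ps)" using eq by simp
  then show ?thesis using n_pos by (simp add: norm_divide norm_power field_simps)
qed

lemma projnorm_set_nonneg:
  "v \<in> {sum_list (map (\<lambda>(a, b). l1norm G a * l1norm G b) ps) | ps. ps \<in> tens_reps G F} \<Longrightarrow> 0 \<le> v"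
  by (auto intro!: sum_list_nonneg simp: l1norm_nonneg)

lemma projnorm_ge:
  assumes "\<mu> \<in> ZL1_tens G" and "\<And>ps. ps \<in> tens_reps G \<mu> \<Longrightarrow> c \<le> sum_list (map (\<lambda>(a, b). l1norm G a * l1norm G b) ps)"
  shows "c \<le> projnorm G \<mu>"
  unfolding projnorm_def using assms by (intro cInf_greatest) (auto simp: ZL1_tens_def)

lemma projnorm_nonneg: "\<mu> \<in> ZL1_tens G \<Longrightarrow> 0 \<le> projnorm G \<mu>"
  by (rule projnorm_ge) (auto intro!: sum_list_nonneg simp: l1norm_nonneg)

lemma projnorm_le: "ps \<in> tens_reps G \<mu> \<Longrightarrow> projnorm G \<mu> \<le> sum_list (map (\<lambda>(a, b). l1norm G a * l1norm G b) ps)"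
  unfolding projnorm_def
  by (rule cInf_lower) (auto intro!: bdd_belowI[of _ 0] sum_list_nonneg simp: l1norm_nonneg)

lemma projnorm_zero: "projnorm G (\<lambda>z. 0) = 0"
proof -
  have "[] \<in> tens_reps G (\<lambda>z. 0)" by (simp add: tens_reps_def)
  then have "projnorm G (\<lambda>z. 0) \<le> 0" using projnorm_le by fastforce
  moreover have "0 \<le> projnorm G (\<lambda>z. 0)"
    using \<open>[] \<in> tens_reps G (\<lambda>z. 0)\<close> by (intro projnorm_nonneg) (auto simp: ZL1_tens_def)
  ultimately show ?thesis by simp
qed

lemma functional_bound:
  assumes "\<mu> \<in> ZL1_tens G" "\<And>x y. cmod (\<phi> x y) \<le> 1"
  shows "cmod ((\<Sum>x\<in>carrier G. \<Sum>y\<in>carrier G. \<phi> x y * \<mu> (x, y)) / (of_nat n)^2) \<le> projnorm G \<mu>"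
  using assms by (intro projnorm_ge rep_bound) auto

lemma point_bound:
  assumes "\<mu> \<in> ZL1_tens G" "x \<in> carrier G" "y \<in> carrier G"
  shows "cmod (\<mu> (x, y)) \<le> (real n)^2 * projnorm G \<mu>"
proof -
  have "cmod ((\<Sum>x'\<in>carrier G. \<Sum>y'\<in>carrier G. (if x' = x then (if y' = y then 1 else 0) else 0) * \<mu> (x', y')) / (of_nat n)^2)
        \<le> projnorm G \<mu>"
    using assms by (intro functional_bound) auto
  moreover have "\<And>x'. (\<Sum>y'\<in>carrier G. (if x' = x then (if y' = y then 1 else 0) else 0) * \<mu> (x', y'))
      = (if x' = x then \<mu> (x, y) else 0)"
    using assms fin by (auto simp: sum.delta')
  then have "(\<Sum>x'\<in>carrier G. \<Sum>y'\<in>carrier G. (if x' = x then (if y' = y then 1 else 0) else 0) * \<mu> (x', y')) = \<mu> (x, y)"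
    using assms fin by (simp add: sum.delta')
  ultimately show ?thesis using n_pos by (simp add: norm_divide norm_power field_simps)
qed

end

context fgrp begin

lemma sum_conj: "y \<in> carrier G \<Longrightarrow> (\<Sum>x\<in>carrier G. f (y \<otimes> x \<otimes> inv y)) = (\<Sum>x\<in>carrier G. f x)"
  by (rule sum_bij_self[where k="\<lambda>x. inv y \<otimes> x \<otimes> y"]) (auto simp: gs)

lemma conv_ZL1: assumes a: "a \<in> ZL1 G" and b: "b \<in> ZL1 G" shows "conv G a b \<in> ZL1 G"
proof -
  have "conv G a b (y \<otimes> t \<otimes> inv y) = conv G a b t" if y: "y \<in> carrier G" and t: "t \<in> carrier G" for y t
  proof -
    have "(\<Sum>s\<in>carrier G. a s * b (inv s \<otimes> (y \<otimes> t \<otimes> inv y)))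
        = (\<Sum>s\<in>carrier G. a (y \<otimes> s \<otimes> inv y) * b (inv (y \<otimes> s \<otimes> inv y) \<otimes> (y \<otimes> t \<otimes> inv y)))"
      using y by (rule sum_conj[symmetric])
    also have "\<dots> = (\<Sum>s\<in>carrier G. a s * b (inv s \<otimes> t))"
    proof (intro sum.cong refl)
      fix s assume s: "s \<in> carrier G"
      have "inv (y \<otimes> s \<otimes> inv y) \<otimes> (y \<otimes> t \<otimes> inv y) = y \<otimes> (inv s \<otimes> t) \<otimes> inv y"
        using s t y by (simp add: gs)
      then show "a (y \<otimes> s \<otimes> inv y) * b (inv (y \<otimes> s \<otimes> inv y) \<otimes> (y \<otimes> t \<otimes> inv y)) = a s * b (inv s \<otimes> t)"
        using s t y a b by (simp add: ZL1_conj)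
    qed
    finally show ?thesis using y t by (simp add: conv_def)
  qed
  then show ?thesis by (auto simp: ZL1_def conv_def)
qed

lemma scale_ZL1: "f \<in> ZL1 G \<Longrightarrow> (\<lambda>x. c * f x) \<in> ZL1 G"
  by (auto simp: ZL1_def)

lemma uG_ZL1: "uG G \<in> ZL1 G"
proof -
  have "(y \<otimes> x \<otimes> inv y = \<one>) = (x = \<one>)" if "x \<in> carrier G" "y \<in> carrier G" for x y
  proof
    assume "y \<otimes> x \<otimes> inv y = \<one>"
    then have "inv y \<otimes> (y \<otimes> x \<otimes> inv y) \<otimes> y = inv y \<otimes> \<one> \<otimes> y" by simp
    then show "x = \<one>" using that by (simp add: gs)
  qed (use that in \<open>simp add: gs\<close>)
  then show ?thesis by (auto simp: ZL1_def uG_def)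
qed

lemma conv_uG: assumes "\<And>x. x \<notin> carrier G \<Longrightarrow> f x = 0" shows "conv G f (uG G) = f"
proof
  fix t show "conv G f (uG G) t = f t"
  proof (cases "t \<in> carrier G")
    case True
    have "(\<Sum>s\<in>carrier G. f s * uG G (inv s \<otimes> t)) = (\<Sum>s\<in>carrier G. if s = t then f t * of_nat n else 0)"
    proof (intro sum.cong refl)
      fix s assume s: "s \<in> carrier G"
      have "(inv s \<otimes> t = \<one>) = (s = t)"
      proof
        assume "inv s \<otimes> t = \<one>" then have "s \<otimes> (inv s \<otimes> t) = s \<otimes> \<one>" by simp
        then show "s = t" using s True by (simp add: gs)
      qed (use s in \<open>simp add: gs\<close>)
      then show "f s * uG G (inv s \<otimes> t) = (if s = t then f t * of_nat n else 0)" by (auto simp: uG_def)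
    qed
    then show ?thesis using True fin nC_nz by (simp add: conv_def sum.delta')
  next
    case False then show ?thesis using assms by (simp add: conv_def)
  qed
qed

lemma lact_eval: assumes ps: "ps \<in> tens_reps G \<mu>"
  shows "lact G a \<mu> (x, y) = sum_list (map (\<lambda>p. conv G a (fst p) x * snd p y) ps)"
proof -
  have "lact G a \<mu> (x, y) = (\<Sum>i<length ps. conv G a (fst (ps!i)) x * snd (ps!i) y)"
    unfolding lact_def conv_def tr_eval[OF ps]
    by (simp add: sum_distrib_left sum_divide_distrib sum.swap[of _ "{..<length ps}"] mult_ac)
  then show ?thesis by (simp add: sum_list_sum_nth atLeast0LessThan)
qed

lemma ract_eval: assumes ps: "ps \<in> tens_reps G \<mu>"
  shows "ract G \<mu> a (x, y) = sum_list (map (\<lambda>p. fst p x * conv G (snd p) a y) ps)"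
proof -
  have "ract G \<mu> a (x, y) = (\<Sum>i<length ps. fst (ps!i) x * conv G (snd (ps!i)) a y)"
    unfolding ract_def conv_def tr_eval[OF ps]
    by (simp add: sum_distrib_left sum_distrib_right sum_divide_distrib sum.swap[of _ "{..<length ps}"] mult_ac)
  then show ?thesis by (simp add: sum_list_sum_nth atLeast0LessThan)
qed

lemma sum_list_map_diff: "sum_list (map f xs) - sum_list (map g xs) = sum_list (map (\<lambda>x. f x - g x) xs)"
  for f g :: "_ \<Rightarrow> complex"
  by (induction xs) auto

lemma sum_list_map_neg: "sum_list (map (\<lambda>x. - f x) xs) = - sum_list (map f xs)"
  for f :: "_ \<Rightarrow> complex"
  by (induction xs) auto

lemma comm_tens: assumes a: "a \<in> ZL1 G" and mu: "\<mu> \<in> ZL1_tens G"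
  shows "(\<lambda>z. lact G a \<mu> z - ract G \<mu> a z) \<in> ZL1_tens G"
proof -
  obtain ps where ps: "ps \<in> tens_reps G \<mu>" using mu tens_obtain by blast
  let ?qs = "map (\<lambda>p. (conv G a (fst p), snd p)) ps @ map (\<lambda>p. (\<lambda>t. - fst p t, conv G (snd p) a)) ps"
  have sub: "set ps \<subseteq> ZL1 G \<times> ZL1 G" using ps by (simp add: tens_reps_def)
  have "set ?qs \<subseteq> ZL1 G \<times> ZL1 G"
  proof -
    have neg: "f \<in> ZL1 G \<Longrightarrow> (\<lambda>t. - f t) \<in> ZL1 G" for f by (auto simp: ZL1_def)
    show ?thesis using sub a by (force intro!: conv_ZL1 neg)
  qed
  moreover have "lact G a \<mu> (x, y) - ract G \<mu> a (x, y) = sum_list (map (\<lambda>(p, q). p x * q y) ?qs)" for x y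
    unfolding lact_eval[OF ps] ract_eval[OF ps]
    by (simp add: o_def case_prod_unfold sum_list_map_diff[symmetric] sum_list_map_neg)
  ultimately have "?qs \<in> tens_reps G (\<lambda>z. lact G a \<mu> z - ract G \<mu> a z)"
    by (auto simp: tens_reps_def)
  then show ?thesis by (auto simp: ZL1_tens_def)
qed

end

context fgrp begin

lemma conj_cancel: assumes "y \<in> carrier G" "a \<in> carrier G" "b \<in> carrier G"
  shows "(y \<otimes> a \<otimes> inv y = y \<otimes> b \<otimes> inv y) = (a = b)"
proof
  assume "y \<otimes> a \<otimes> inv y = y \<otimes> b \<otimes> inv y"
  then have "inv y \<otimes> (y \<otimes> a \<otimes> inv y) \<otimes> y = inv y \<otimes> (y \<otimes> b \<otimes> inv y) \<otimes> y" by simp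
  then show "a = b" using assms by (simp add: gs)
qed simp

lemma acl_ZL1: assumes c: "c \<in> carrier G" shows "acl G c \<in> ZL1 G"
proof -
  have "acl G c (y \<otimes> x \<otimes> inv y) = acl G c x" if y: "y \<in> carrier G" and x: "x \<in> carrier G" for x y
  proof -
    have "(\<Sum>g\<in>carrier G. if g \<otimes> c \<otimes> inv g = y \<otimes> x \<otimes> inv y then 1 else 0)
        = (\<Sum>g\<in>carrier G. if (y \<otimes> g) \<otimes> c \<otimes> inv (y \<otimes> g) = y \<otimes> x \<otimes> inv y then 1 else (0::complex))"
      using y by (rule sum_lmult[symmetric])
    also have "\<dots> = (\<Sum>g\<in>carrier G. if g \<otimes> c \<otimes> inv g = x then 1 else 0)"
    proof (intro sum.cong refl)
      fix g assume g: "g \<in> carrier G"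
      have "(y \<otimes> g) \<otimes> c \<otimes> inv (y \<otimes> g) = y \<otimes> (g \<otimes> c \<otimes> inv g) \<otimes> inv y" using g y c by (simp add: gs)
      then show "(if (y \<otimes> g) \<otimes> c \<otimes> inv (y \<otimes> g) = y \<otimes> x \<otimes> inv y then 1 else (0::complex))
          = (if g \<otimes> c \<otimes> inv g = x then 1 else 0)" using conj_cancel g y c x by simp
    qed
    finally show ?thesis using x y by (simp add: acl_def)
  qed
  then show ?thesis by (auto simp: ZL1_def acl_def)
qed

lemma Pop_out: "x \<notin> carrier G \<or> y \<notin> carrier G \<Longrightarrow> Pop G h (x, y) = 0"
  by (auto simp: Pop_def)

lemma Pop_in: "x \<in> carrier G \<Longrightarrow> y \<in> carrier G \<Longrightarrow>
   Pop G h (x, y) = (\<Sum>g\<in>carrier G. h (g \<otimes> y \<otimes> inv g \<otimes> x)) / of_nat n"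
  by (simp add: Pop_def)

lemma Pop_class1: assumes h: "h \<in> ZL1 G" and x: "x \<in> carrier G" and y: "y \<in> carrier G" and k: "k \<in> carrier G"
  shows "Pop G h (k \<otimes> x \<otimes> inv k, y) = Pop G h (x, y)"
proof -
  have "(\<Sum>g\<in>carrier G. h (g \<otimes> y \<otimes> inv g \<otimes> (k \<otimes> x \<otimes> inv k)))
      = (\<Sum>g\<in>carrier G. h ((inv k \<otimes> g) \<otimes> y \<otimes> inv (inv k \<otimes> g) \<otimes> x))"
  proof (intro sum.cong refl)
    fix g assume g: "g \<in> carrier G"
    have "h (inv k \<otimes> (g \<otimes> y \<otimes> inv g \<otimes> (k \<otimes> x \<otimes> inv k)) \<otimes> inv (inv k)) = h (g \<otimes> y \<otimes> inv g \<otimes> (k \<otimes> x \<otimes> inv k))"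
      using g x y k h by (intro ZL1_conj) auto
    moreover have "inv k \<otimes> (g \<otimes> y \<otimes> inv g \<otimes> (k \<otimes> x \<otimes> inv k)) \<otimes> inv (inv k) = (inv k \<otimes> g) \<otimes> y \<otimes> inv (inv k \<otimes> g) \<otimes> x"
      using g x y k by (simp add: gs)
    ultimately show "h (g \<otimes> y \<otimes> inv g \<otimes> (k \<otimes> x \<otimes> inv k)) = h ((inv k \<otimes> g) \<otimes> y \<otimes> inv (inv k \<otimes> g) \<otimes> x)" by simp
  qed
  also have "\<dots> = (\<Sum>g\<in>carrier G. h (g \<otimes> y \<otimes> inv g \<otimes> x))"
    using k by (intro sum_lmult) auto
  finally show ?thesis using x y k by (simp add: Pop_in)
qed

lemma Pop_class2: assumes x: "x \<in> carrier G" and y: "y \<in> carrier G" and k: "k \<in> carrier G"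
  shows "Pop G h (x, k \<otimes> y \<otimes> inv k) = Pop G h (x, y)"
proof -
  have "(\<Sum>g\<in>carrier G. h (g \<otimes> (k \<otimes> y \<otimes> inv k) \<otimes> inv g \<otimes> x))
      = (\<Sum>g\<in>carrier G. h ((g \<otimes> k) \<otimes> y \<otimes> inv (g \<otimes> k) \<otimes> x))"
    using x y k by (intro sum.cong refl) (simp add: gs)
  also have "\<dots> = (\<Sum>g\<in>carrier G. h (g \<otimes> y \<otimes> inv g \<otimes> x))"
    using k by (intro sum_rmult) auto
  finally show ?thesis using x y k by (simp add: Pop_in)
qed

lemma Pop_slice1: assumes h: "h \<in> ZL1 G" shows "(\<lambda>t. Pop G h (t, y)) \<in> ZL1 G"
  unfolding ZL1_def
proof (intro CollectI conjI allI impI ballI)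
  fix x k assume "x \<in> carrier G" "k \<in> carrier G"
  then show "Pop G h (k \<otimes> x \<otimes> inv k, y) = Pop G h (x, y)"
    using h by (cases "y \<in> carrier G") (simp_all add: Pop_class1 Pop_out)
qed (simp add: Pop_out)

lemma Pop_slice2: "(\<lambda>t. Pop G h (x, t)) \<in> ZL1 G"
  unfolding ZL1_def
proof (intro CollectI conjI allI impI ballI)
  fix y k assume "y \<in> carrier G" "k \<in> carrier G"
  then show "Pop G h (x, k \<otimes> y \<otimes> inv k) = Pop G h (x, y)"
    by (cases "x \<in> carrier G") (simp_all add: Pop_class2 Pop_out)
qed (simp add: Pop_out)

lemma div_ZL1: "f \<in> ZL1 G \<Longrightarrow> (\<lambda>x. f x / c) \<in> ZL1 G"
  by (auto simp: ZL1_def)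

lemma Pop_tens: assumes h: "h \<in> ZL1 G" shows "Pop G h \<in> ZL1_tens G"
proof -
  obtain xs where xs: "set xs = carrier G" "distinct xs" using fin finite_distinct_list by blast
  let ?ps = "map (\<lambda>c. (\<lambda>x. acl G c x / of_nat n, \<lambda>y. Pop G h (c, y))) xs"
  have "set ?ps \<subseteq> ZL1 G \<times> ZL1 G"
  proof (rule subsetI)
    fix p assume "p \<in> set ?ps"
    then obtain c where c: "c \<in> set xs" "p = (\<lambda>x. acl G c x / of_nat n, \<lambda>y. Pop G h (c, y))" by auto
    then have "c \<in> carrier G" using xs by simp
    then show "p \<in> ZL1 G \<times> ZL1 G" using c by (simp add: div_ZL1 acl_ZL1 Pop_slice2)
  qed
  moreover have "Pop G h (x, y) = sum_list (map (\<lambda>(a, b). a x * b y) ?ps)" for x y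
  proof -
    have "sum_list (map (\<lambda>(a, b). a x * b y) ?ps) = (\<Sum>c\<in>carrier G. acl G c x / of_nat n * Pop G h (c, y))"
      using xs by (simp only: map_map o_def case_prod_conv sum_list_distinct_conv_sum_set)
    also have "\<dots> = Pop G h (x, y)"
    proof (cases "x \<in> carrier G")
      case True
      have "(\<Sum>c\<in>carrier G. acl G c x * Pop G h (c, y)) = of_nat n * Pop G h (x, y)"
        using class_expand[OF Pop_slice1[OF h] True] by simp
      have "(\<Sum>c\<in>carrier G. acl G c x / of_nat n * Pop G h (c, y))
          = (\<Sum>c\<in>carrier G. acl G c x * Pop G h (c, y)) / of_nat n"
        by (simp add: sum_divide_distrib)
      then show ?thesis using nC_nz \<open>(\<Sum>c\<in>carrier G. acl G c x * Pop G h (c, y)) = of_nat n * Pop G h (x, y)\<close> by simp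
    next
      case False then show ?thesis by (simp add: acl_def Pop_out)
    qed
    finally show ?thesis by simp
  qed
  ultimately have "?ps \<in> tens_reps G (Pop G h)" unfolding tens_reps_def by blast
  then show ?thesis by (auto simp: ZL1_tens_def)
qed

end

context fgrp begin

lemma casimir_pt: assumes a: "a \<in> ZL1 G" and w: "w \<in> ZL1 G"
  and g: "g \<in> carrier G" and x: "x \<in> carrier G" and y: "y \<in> carrier G"
  shows "(\<Sum>s\<in>carrier G. a s * w (g \<otimes> y \<otimes> inv g \<otimes> (inv s \<otimes> x)))
       = (\<Sum>s\<in>carrier G. w (g \<otimes> s \<otimes> inv g \<otimes> x) * a (inv s \<otimes> y))"
proof -
  have "(\<Sum>s\<in>carrier G. a s * w (g \<otimes> y \<otimes> inv g \<otimes> (inv s \<otimes> x)))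
      = (\<Sum>v\<in>carrier G. (\<lambda>s. a s * w (g \<otimes> y \<otimes> inv g \<otimes> (inv s \<otimes> x))) (x \<otimes> inv v \<otimes> g \<otimes> y \<otimes> inv g))"
    by (rule sum_bij_self[where k="\<lambda>s. g \<otimes> y \<otimes> inv g \<otimes> (inv s \<otimes> x)", symmetric]) (use g x y in \<open>auto simp: gs\<close>)
  also have "\<dots> = (\<Sum>v\<in>carrier G. a (x \<otimes> inv v \<otimes> g \<otimes> y \<otimes> inv g) * w v)"
    using g x y by (intro sum.cong refl) (simp add: gs)
  also have "\<dots> = (\<Sum>v\<in>carrier G. (\<lambda>s. w (g \<otimes> s \<otimes> inv g \<otimes> x) * a (inv s \<otimes> y)) (inv g \<otimes> v \<otimes> inv x \<otimes> g))"
  proof (intro sum.cong refl)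
    fix v assume v: "v \<in> carrier G"
    have "a (g \<otimes> (inv g \<otimes> x \<otimes> inv v \<otimes> g \<otimes> y) \<otimes> inv g) = a (inv g \<otimes> x \<otimes> inv v \<otimes> g \<otimes> y)"
      using a g x y v by (intro ZL1_conj) auto
    moreover have "g \<otimes> (inv g \<otimes> x \<otimes> inv v \<otimes> g \<otimes> y) \<otimes> inv g = x \<otimes> inv v \<otimes> g \<otimes> y \<otimes> inv g"
      using g x y v by (simp add: gs)
    moreover have "inv (inv g \<otimes> v \<otimes> inv x \<otimes> g) \<otimes> y = inv g \<otimes> x \<otimes> inv v \<otimes> g \<otimes> y"
      using g x y v by (simp add: gs)
    moreover have "g \<otimes> (inv g \<otimes> v \<otimes> inv x \<otimes> g) \<otimes> inv g \<otimes> x = v"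
      using g x y v by (simp add: gs)
    ultimately show "a (x \<otimes> inv v \<otimes> g \<otimes> y \<otimes> inv g) * w v
        = (\<lambda>s. w (g \<otimes> s \<otimes> inv g \<otimes> x) * a (inv s \<otimes> y)) (inv g \<otimes> v \<otimes> inv x \<otimes> g)" by simp
  qed
  also have "\<dots> = (\<Sum>s\<in>carrier G. w (g \<otimes> s \<otimes> inv g \<otimes> x) * a (inv s \<otimes> y))"
    by (rule sum_bij_self[where k="\<lambda>s. g \<otimes> s \<otimes> inv g \<otimes> x"]) (use g x y in \<open>auto simp: gs\<close>)
  finally show ?thesis .
qed

lemma casimir: assumes a: "a \<in> ZL1 G" and w: "w \<in> ZL1 G"
  shows "lact G a (Pop G w) z = ract G (Pop G w) a z"
proof -
  obtain x y where z: "z = (x, y)" by fastforce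
  show ?thesis
  proof (cases "x \<in> carrier G \<and> y \<in> carrier G")
    case True
    then have x: "x \<in> carrier G" and y: "y \<in> carrier G" by auto
    have "lact G a (Pop G w) z = (\<Sum>s\<in>carrier G. a s * Pop G w (inv s \<otimes> x, y)) / of_nat n"
      using x by (simp add: z lact_def conv_def)
    also have "\<dots> = (\<Sum>s\<in>carrier G. \<Sum>g\<in>carrier G. a s * w (g \<otimes> y \<otimes> inv g \<otimes> (inv s \<otimes> x))) / (of_nat n)^2"
      using x y by (simp add: Pop_in sum_distrib_left sum_divide_distrib power2_eq_square)
    also have "\<dots> = (\<Sum>g\<in>carrier G. \<Sum>s\<in>carrier G. a s * w (g \<otimes> y \<otimes> inv g \<otimes> (inv s \<otimes> x))) / (of_nat n)^2"
      by (subst sum.swap) (rule refl)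
    also have "\<dots> = (\<Sum>g\<in>carrier G. \<Sum>s\<in>carrier G. w (g \<otimes> s \<otimes> inv g \<otimes> x) * a (inv s \<otimes> y)) / (of_nat n)^2"
      using a w x y by (simp add: casimir_pt)
    also have "\<dots> = (\<Sum>s\<in>carrier G. \<Sum>g\<in>carrier G. w (g \<otimes> s \<otimes> inv g \<otimes> x) * a (inv s \<otimes> y)) / (of_nat n)^2"
      by (subst sum.swap) (rule refl)
    also have "\<dots> = (\<Sum>s\<in>carrier G. Pop G w (x, s) * a (inv s \<otimes> y)) / of_nat n"
      using x y by (simp add: Pop_in sum_distrib_right sum_divide_distrib power2_eq_square)
    also have "\<dots> = ract G (Pop G w) a z"
      using y by (simp add: z ract_def conv_def)
    finally show ?thesis .
  next
    case False
    then show ?thesis by (auto simp: z lact_def ract_def conv_def Pop_out)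
  qed
qed

lemma decomp: assumes mu: "\<mu> \<in> ZL1_tens G" and x: "x \<in> carrier G" and y: "y \<in> carrier G"
  shows "\<mu> (x, y) = Pop G (\<lambda>t. \<mu> (t, \<one>)) (x, y)
     - (lact G (acl G (inv y)) \<mu> (x, \<one>) - ract G \<mu> (acl G (inv y)) (x, \<one>))"
proof -
  have iy: "inv y \<in> carrier G" using y by simp
  have "lact G (acl G (inv y)) \<mu> (x, \<one>) = (\<Sum>s\<in>carrier G. acl G (inv y) s * \<mu> (inv s \<otimes> x, \<one>)) / of_nat n"
    using x by (simp add: lact_def conv_def)
  also have "\<dots> = (\<Sum>g\<in>carrier G. \<mu> (inv (g \<otimes> inv y \<otimes> inv g) \<otimes> x, \<one>)) / of_nat n"
    using acl_fiber[OF iy] by simp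
  also have "\<dots> = Pop G (\<lambda>t. \<mu> (t, \<one>)) (x, y)"
    using x y by (simp add: Pop_in gs)
  finally have l: "lact G (acl G (inv y)) \<mu> (x, \<one>) = Pop G (\<lambda>t. \<mu> (t, \<one>)) (x, y)" .
  have "ract G \<mu> (acl G (inv y)) (x, \<one>) = (\<Sum>s\<in>carrier G. \<mu> (x, s) * acl G (inv y) (inv s \<otimes> \<one>)) / of_nat n"
    by (simp add: ract_def conv_def)
  also have "(\<Sum>s\<in>carrier G. \<mu> (x, s) * acl G (inv y) (inv s \<otimes> \<one>)) = (\<Sum>s\<in>carrier G. \<mu> (x, inv s) * acl G (inv y) s)"
  proof -
    have "(\<Sum>s\<in>carrier G. \<mu> (x, s) * acl G (inv y) (inv s \<otimes> \<one>)) = (\<Sum>s\<in>carrier G. \<mu> (x, s) * acl G (inv y) (inv s))"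
      by (intro sum.cong refl) simp
    also have "\<dots> = (\<Sum>s\<in>carrier G. \<mu> (x, inv s) * acl G (inv y) (inv (inv s)))"
      by (rule sum_inv[where f="\<lambda>s. \<mu> (x, s) * acl G (inv y) (inv s)", symmetric])
    also have "\<dots> = (\<Sum>s\<in>carrier G. \<mu> (x, inv s) * acl G (inv y) s)"
      by (intro sum.cong refl) simp
    finally show ?thesis .
  qed
  also have "\<dots> = (\<Sum>g\<in>carrier G. \<mu> (x, inv (g \<otimes> inv y \<otimes> inv g)))"
    using acl_fiber[OF iy, of "\<lambda>s. \<mu> (x, inv s)"] by (simp add: mult.commute)
  also have "\<dots> = (\<Sum>g\<in>carrier G. \<mu> (x, y))"
  proof (intro sum.cong refl)
    fix g assume g: "g \<in> carrier G"
    have "inv (g \<otimes> inv y \<otimes> inv g) = g \<otimes> y \<otimes> inv g" using g y by (simp add: gs)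
    then show "\<mu> (x, inv (g \<otimes> inv y \<otimes> inv g)) = \<mu> (x, y)"
      using ZL1_conj[OF tens_slice2[OF mu, of x] y g] by simp
  qed
  finally have r: "ract G \<mu> (acl G (inv y)) (x, \<one>) = \<mu> (x, y)" using nC_nz by simp
  show ?thesis using l r by simp
qed

end

context fgrp begin

lemma tens_conj_both: assumes mu: "\<mu> \<in> ZL1_tens G" and x: "x \<in> carrier G" and y: "y \<in> carrier G"
  and k: "k \<in> carrier G"
  shows "\<mu> (k \<otimes> x \<otimes> inv k, k \<otimes> y \<otimes> inv k) = \<mu> (x, y)"
proof -
  have "\<mu> (k \<otimes> x \<otimes> inv k, k \<otimes> y \<otimes> inv k) = \<mu> (x, k \<otimes> y \<otimes> inv k)"
    using ZL1_conj[OF tens_slice1[OF mu, of "k \<otimes> y \<otimes> inv k"] x k] by simp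
  also have "\<dots> = \<mu> (x, y)" using ZL1_conj[OF tens_slice2[OF mu, of x] y k] by simp
  finally show ?thesis .
qed

lemma mtens_ZL1: assumes mu: "\<mu> \<in> ZL1_tens G" shows "mtens G \<mu> \<in> ZL1 G"
proof -
  have "mtens G \<mu> (y \<otimes> t \<otimes> inv y) = mtens G \<mu> t" if y: "y \<in> carrier G" and t: "t \<in> carrier G" for y t
  proof -
    have "(\<Sum>s\<in>carrier G. \<mu> (s, inv s \<otimes> (y \<otimes> t \<otimes> inv y)))
        = (\<Sum>s\<in>carrier G. \<mu> (y \<otimes> s \<otimes> inv y, inv (y \<otimes> s \<otimes> inv y) \<otimes> (y \<otimes> t \<otimes> inv y)))"
      using y by (rule sum_conj[symmetric])
    also have "\<dots> = (\<Sum>s\<in>carrier G. \<mu> (s, inv s \<otimes> t))"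
    proof (intro sum.cong refl)
      fix s assume s: "s \<in> carrier G"
      have "inv (y \<otimes> s \<otimes> inv y) \<otimes> (y \<otimes> t \<otimes> inv y) = y \<otimes> (inv s \<otimes> t) \<otimes> inv y"
        using s t y by (simp add: gs)
      then show "\<mu> (y \<otimes> s \<otimes> inv y, inv (y \<otimes> s \<otimes> inv y) \<otimes> (y \<otimes> t \<otimes> inv y)) = \<mu> (s, inv s \<otimes> t)"
        using tens_conj_both[OF mu s _ y, of "inv s \<otimes> t"] s t by simp
    qed
    finally show ?thesis using y t by (simp add: mtens_def)
  qed
  then show ?thesis by (auto simp: ZL1_def mtens_def)
qed

lemma Zop_ZL1: "h \<in> ZL1 G \<Longrightarrow> Zop G h \<in> ZL1 G"
  unfolding Zop_def by (intro mtens_ZL1 Pop_tens)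

lemma Zop_in: assumes t: "t \<in> carrier G"
  shows "Zop G h t = (\<Sum>s\<in>carrier G. \<Sum>g\<in>carrier G. h (g \<otimes> (inv s \<otimes> t) \<otimes> inv g \<otimes> s)) / (of_nat n)^2"
  using t by (simp add: Zop_def mtens_def Pop_in sum_divide_distrib power2_eq_square)

lemma Zop_out: "t \<notin> carrier G \<Longrightarrow> Zop G h t = 0"
  by (simp add: Zop_def mtens_def)

lemma Zop_lin: "Zop G (\<lambda>t. \<Sum>c\<in>A. a c * W c t) t = (\<Sum>c\<in>A. a c * Zop G (W c) t)"
proof (cases "t \<in> carrier G")
  case True
  show ?thesis unfolding Zop_in[OF True]
    by (simp add: sum_distrib_left sum_divide_distrib sum.swap[of _ A] mult_ac)
next
  case False then show ?thesis by (simp add: Zop_out)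
qed

lemma Zop_diff: "Zop G (\<lambda>t. f t - g t) t = Zop G f t - Zop G g t"
proof (cases "t \<in> carrier G")
  case True
  show ?thesis unfolding Zop_in[OF True]
    by (simp add: sum_subtractf diff_divide_distrib)
next
  case False then show ?thesis by (simp add: Zop_out)
qed

lemma avg_lemma:
  "(\<Sum>r\<in>carrier G. \<Sum>g\<in>carrier G. F (g \<otimes> r \<otimes> inv g) * cnj (F r)) * of_nat n
   = (\<Sum>r\<in>carrier G. (\<Sum>g\<in>carrier G. F (g \<otimes> r \<otimes> inv g)) * cnj (\<Sum>k\<in>carrier G. F (k \<otimes> r \<otimes> inv k)))"
proof -
  have "(\<Sum>r\<in>carrier G. (\<Sum>g\<in>carrier G. F (g \<otimes> r \<otimes> inv g)) * cnj (\<Sum>k\<in>carrier G. F (k \<otimes> r \<otimes> inv k)))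
      = (\<Sum>r\<in>carrier G. \<Sum>k\<in>carrier G. \<Sum>g\<in>carrier G. F (g \<otimes> r \<otimes> inv g) * cnj (F (k \<otimes> r \<otimes> inv k)))"
    by (simp add: sum_distrib_left sum_distrib_right mult_ac)
  also have "\<dots> = (\<Sum>k\<in>carrier G. \<Sum>r\<in>carrier G. \<Sum>g\<in>carrier G. F (g \<otimes> r \<otimes> inv g) * cnj (F (k \<otimes> r \<otimes> inv k)))"
    by (rule sum.swap)
  also have "\<dots> = (\<Sum>k\<in>carrier G. \<Sum>r\<in>carrier G. \<Sum>g\<in>carrier G. F (g \<otimes> r \<otimes> inv g) * cnj (F r))"
  proof (rule sum.cong[OF refl])
    fix k assume k: "k \<in> carrier G"
    have "(\<Sum>r\<in>carrier G. \<Sum>g\<in>carrier G. F (g \<otimes> r \<otimes> inv g) * cnj (F (k \<otimes> r \<otimes> inv k)))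
       = (\<Sum>r\<in>carrier G. (\<lambda>r. \<Sum>g\<in>carrier G. F (g \<otimes> r \<otimes> inv g) * cnj (F (k \<otimes> r \<otimes> inv k))) (inv k \<otimes> r \<otimes> inv (inv k)))"
      using k by (intro sum_conj[symmetric]) auto
    also have "\<dots> = (\<Sum>r\<in>carrier G. \<Sum>g\<in>carrier G. F ((g \<otimes> inv k) \<otimes> r \<otimes> inv (g \<otimes> inv k)) * cnj (F r))"
      using k by (intro sum.cong refl) (simp add: gs)
    also have "\<dots> = (\<Sum>r\<in>carrier G. \<Sum>g\<in>carrier G. F (g \<otimes> r \<otimes> inv g) * cnj (F r))"
    proof (rule sum.cong[OF refl])
      fix r assume r: "r \<in> carrier G"
      show "(\<Sum>g\<in>carrier G. F ((g \<otimes> inv k) \<otimes> r \<otimes> inv (g \<otimes> inv k)) * cnj (F r))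
          = (\<Sum>g\<in>carrier G. F (g \<otimes> r \<otimes> inv g) * cnj (F r))"
        using k by (intro sum_rmult[where f="\<lambda>g. F (g \<otimes> r \<otimes> inv g) * cnj (F r)"]) auto
    qed
    finally show "(\<Sum>r\<in>carrier G. \<Sum>g\<in>carrier G. F (g \<otimes> r \<otimes> inv g) * cnj (F (k \<otimes> r \<otimes> inv k)))
       = (\<Sum>r\<in>carrier G. \<Sum>g\<in>carrier G. F (g \<otimes> r \<otimes> inv g) * cnj (F r))" .
  qed
  also have "\<dots> = (\<Sum>r\<in>carrier G. \<Sum>g\<in>carrier G. F (g \<otimes> r \<otimes> inv g) * cnj (F r)) * of_nat n"
    by simp
  finally show ?thesis by simp
qed

definition Qf :: "('a \<Rightarrow> complex) \<Rightarrow> complex" where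
  "Qf h = (\<Sum>t\<in>carrier G. Zop G h t * cnj (h t))"

lemma Qf_formula: assumes h: "h \<in> ZL1 G"
  shows "Qf h * (of_nat n)^3 = (\<Sum>s\<in>carrier G. \<Sum>r\<in>carrier G.
      (\<Sum>g\<in>carrier G. h (g \<otimes> r \<otimes> inv g \<otimes> s)) * cnj (\<Sum>k\<in>carrier G. h (k \<otimes> r \<otimes> inv k \<otimes> s)))"
proof -
  have "Qf h * (of_nat n)^2 = (\<Sum>t\<in>carrier G. \<Sum>s\<in>carrier G. \<Sum>g\<in>carrier G. h (g \<otimes> (inv s \<otimes> t) \<otimes> inv g \<otimes> s) * cnj (h t))"
    using nC_nz by (simp add: Qf_def Zop_in sum_distrib_right sum_divide_distrib)
  also have "\<dots> = (\<Sum>s\<in>carrier G. \<Sum>t\<in>carrier G. \<Sum>g\<in>carrier G. h (g \<otimes> (inv s \<otimes> t) \<otimes> inv g \<otimes> s) * cnj (h t))"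
    by (rule sum.swap)
  also have "\<dots> = (\<Sum>s\<in>carrier G. \<Sum>r\<in>carrier G. \<Sum>g\<in>carrier G. h (g \<otimes> r \<otimes> inv g \<otimes> s) * cnj (h (r \<otimes> s)))"
  proof (rule sum.cong[OF refl])
    fix s assume s: "s \<in> carrier G"
    have "(\<Sum>t\<in>carrier G. \<Sum>g\<in>carrier G. h (g \<otimes> (inv s \<otimes> t) \<otimes> inv g \<otimes> s) * cnj (h t))
      = (\<Sum>t\<in>carrier G. (\<lambda>t. \<Sum>g\<in>carrier G. h (g \<otimes> (inv s \<otimes> t) \<otimes> inv g \<otimes> s) * cnj (h t)) (s \<otimes> t))"
      using s by (intro sum_lmult[symmetric])
    also have "\<dots> = (\<Sum>r\<in>carrier G. \<Sum>g\<in>carrier G. h (g \<otimes> r \<otimes> inv g \<otimes> s) * cnj (h (r \<otimes> s)))"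
    proof (intro sum.cong refl)
      fix r g assume r: "r \<in> carrier G" and g: "g \<in> carrier G"
      have "h (s \<otimes> r) = h (r \<otimes> s)" using ZL1_rot[OF h s r] .
      then show "h (g \<otimes> (inv s \<otimes> (s \<otimes> r)) \<otimes> inv g \<otimes> s) * cnj (h (s \<otimes> r)) = h (g \<otimes> r \<otimes> inv g \<otimes> s) * cnj (h (r \<otimes> s))"
        using s r g by (simp add: gs)
    qed
    finally show "(\<Sum>t\<in>carrier G. \<Sum>g\<in>carrier G. h (g \<otimes> (inv s \<otimes> t) \<otimes> inv g \<otimes> s) * cnj (h t))
      = (\<Sum>r\<in>carrier G. \<Sum>g\<in>carrier G. h (g \<otimes> r \<otimes> inv g \<otimes> s) * cnj (h (r \<otimes> s)))" .
  qed
  finally have 1: "Qf h * (of_nat n)^2 = (\<Sum>s\<in>carrier G. \<Sum>r\<in>carrier G. \<Sum>g\<in>carrier G. h (g \<otimes> r \<otimes> inv g \<otimes> s) * cnj (h (r \<otimes> s)))" .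
  have 2: "(\<Sum>r\<in>carrier G. \<Sum>g\<in>carrier G. h (g \<otimes> r \<otimes> inv g \<otimes> s) * cnj (h (r \<otimes> s))) * of_nat n
      = (\<Sum>r\<in>carrier G. (\<Sum>g\<in>carrier G. h (g \<otimes> r \<otimes> inv g \<otimes> s)) * cnj (\<Sum>k\<in>carrier G. h (k \<otimes> r \<otimes> inv k \<otimes> s)))"
    for s using avg_lemma[of "\<lambda>v. h (v \<otimes> s)"] by simp
  have "Qf h * (of_nat n)^3 = (Qf h * (of_nat n)^2) * of_nat n" by (simp add: power3_eq_cube power2_eq_square)
  also have "\<dots> = (\<Sum>s\<in>carrier G. (\<Sum>r\<in>carrier G. \<Sum>g\<in>carrier G. h (g \<otimes> r \<otimes> inv g \<otimes> s) * cnj (h (r \<otimes> s))) * of_nat n)"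
    unfolding 1 by (simp add: sum_distrib_right)
  also have "\<dots> = (\<Sum>s\<in>carrier G. \<Sum>r\<in>carrier G.
      (\<Sum>g\<in>carrier G. h (g \<otimes> r \<otimes> inv g \<otimes> s)) * cnj (\<Sum>k\<in>carrier G. h (k \<otimes> r \<otimes> inv k \<otimes> s)))"
    unfolding 2 ..
  finally show ?thesis .
qed

lemma Qf_nonneg: assumes h: "h \<in> ZL1 G"
  obtains q where "Qf h = of_real q" "q \<ge> 0" "q = 0 \<Longrightarrow> h = (\<lambda>t. 0)"
proof -
  define A where "A s r = (\<Sum>g\<in>carrier G. h (g \<otimes> r \<otimes> inv g \<otimes> s))" for s r
  define q where "q = (\<Sum>s\<in>carrier G. \<Sum>r\<in>carrier G. (cmod (A s r))^2) / (real n)^3"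
  have "Qf h * (of_nat n)^3 = (\<Sum>s\<in>carrier G. \<Sum>r\<in>carrier G. of_real ((cmod (A s r))^2))"
    unfolding Qf_formula[OF h] A_def complex_norm_square ..
  then have "Qf h * (of_nat n)^3 = of_real (\<Sum>s\<in>carrier G. \<Sum>r\<in>carrier G. (cmod (A s r))^2)" by simp
  then have Q: "Qf h = of_real q" using nC_nz by (simp add: q_def field_simps)
  have q0: "q \<ge> 0" by (simp add: q_def sum_nonneg)
  have "h = (\<lambda>t. 0)" if "q = 0"
  proof
    fix t show "h t = 0"
    proof (cases "t \<in> carrier G")
      case True
      have "(\<Sum>s\<in>carrier G. \<Sum>r\<in>carrier G. (cmod (A s r))^2) = 0" using that n_pos by (simp add: q_def)
      then have "\<forall>s\<in>carrier G. (\<Sum>r\<in>carrier G. (cmod (A s r))^2) = 0"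
        using fin by (subst (asm) sum_nonneg_eq_0_iff) (auto intro: sum_nonneg)
      then have "(\<Sum>r\<in>carrier G. (cmod (A t r))^2) = 0" using True by blast
      then have "(cmod (A t \<one>))^2 = 0" using fin by (subst (asm) sum_nonneg_eq_0_iff) auto
      then have "A t \<one> = 0" by simp
      moreover have "A t \<one> = of_nat n * h t" using True by (simp add: A_def gs)
      ultimately show ?thesis using nC_nz by simp
    next
      case False then show ?thesis using h by (simp add: ZL1_zero)
    qed
  qed
  then show ?thesis using that Q q0 by blast
qed

lemma Zop_inj: assumes h: "h \<in> ZL1 G" and z: "\<And>t. Zop G h t = 0" shows "h = (\<lambda>t. 0)"
proof -
  obtain q where q: "Qf h = of_real q" "q \<ge> 0" "q = 0 \<Longrightarrow> h = (\<lambda>t. 0)" using Qf_nonneg[OF h] by blast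
  have "Qf h = 0" using z by (simp add: Qf_def)
  then show ?thesis using q by simp
qed

end

interpretation fvs: vector_space "\<lambda>(c::complex) (f::'a \<Rightarrow> complex). (\<lambda>x. c * f x)"
  by unfold_locales (auto simp: fun_eq_iff algebra_simps)

lemma fsum_apply: "(sum F A) x = (\<Sum>c\<in>A. F c x)" for F :: "'c \<Rightarrow> 'a \<Rightarrow> complex"
  by (induction A rule: infinite_finite_induct) auto

context fgrp begin

lemma ZL1_subspace: "fvs.subspace (ZL1 G)"
  unfolding fvs.subspace_def by (auto simp: ZL1_def)

lemma ZL1_span: "ZL1 G = fvs.span (acl G ` carrier G)"
proof
  show "fvs.span (acl G ` carrier G) \<subseteq> ZL1 G"
    by (rule fvs.span_minimal) (auto intro: acl_ZL1 ZL1_subspace)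
next
  show "ZL1 G \<subseteq> fvs.span (acl G ` carrier G)"
  proof
    fix f assume f: "f \<in> ZL1 G"
    have "f = (\<Sum>c\<in>carrier G. (\<lambda>x. (f c / of_nat n) * acl G c x))"
    proof
      fix x show "f x = (\<Sum>c\<in>carrier G. (\<lambda>x. (f c / of_nat n) * acl G c x)) x"
      proof (cases "x \<in> carrier G")
        case True
        have "(\<Sum>c\<in>carrier G. (f c / of_nat n) * acl G c x) = (\<Sum>c\<in>carrier G. acl G c x * f c) / of_nat n"
          by (simp add: sum_divide_distrib mult_ac)
        then show ?thesis using class_expand[OF f True] nC_nz by (simp add: fsum_apply)
      next
        case False then show ?thesis using f by (simp add: fsum_apply acl_def ZL1_zero)
      qed
    qed
    also have "\<dots> \<in> fvs.span (acl G ` carrier G)"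
      by (intro fvs.span_sum fvs.span_scale fvs.span_base) auto
    finally show "f \<in> fvs.span (acl G ` carrier G)" .
  qed
qed

lemma Zop_add: "Zop G (f + g) = Zop G f + Zop G g"
proof
  fix t show "Zop G (f + g) t = (Zop G f + Zop G g) t"
  proof (cases "t \<in> carrier G")
    case True
    show ?thesis unfolding plus_fun_def Zop_in[OF True]
      by (simp add: sum.distrib add_divide_distrib)
  next
    case False then show ?thesis by (simp add: Zop_out)
  qed
qed

lemma Zop_scale: "Zop G (\<lambda>x. c * f x) = (\<lambda>x. c * Zop G f x)"
proof
  fix t show "Zop G (\<lambda>x. c * f x) t = c * Zop G f t"
  proof (cases "t \<in> carrier G")
    case True
    show ?thesis unfolding Zop_in[OF True]
      by (simp add: sum_distrib_left)
  next
    case False then show ?thesis by (simp add: Zop_out)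
  qed
qed

lemma Zop_hom: "module_hom (\<lambda>(c::complex) (f::'a \<Rightarrow> complex). (\<lambda>x. c * f x)) (\<lambda>(c::complex) (f::'a \<Rightarrow> complex). (\<lambda>x. c * f x)) (Zop G)"
  by unfold_locales (auto simp: fun_eq_iff algebra_simps Zop_add Zop_scale)

lemma Zop_inj_on: "inj_on (Zop G) (ZL1 G)"
proof (rule inj_onI)
  fix f g assume f: "f \<in> ZL1 G" and g: "g \<in> ZL1 G" and e: "Zop G f = Zop G g"
  have d: "(\<lambda>t. f t - g t) \<in> ZL1 G" using f g by (auto simp: ZL1_def)
  have "Zop G (\<lambda>t. f t - g t) t = 0" for t using e by (simp add: Zop_diff)
  then have "(\<lambda>t. f t - g t) = (\<lambda>t. 0)" using Zop_inj[OF d] by blast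
  then show "f = g" by (auto simp: fun_eq_iff dest: fun_cong)
qed

lemma Zop_surj: assumes b: "b \<in> ZL1 G" shows "\<exists>W\<in>ZL1 G. Zop G W = b"
proof -
  let ?B0 = "acl G ` carrier G"
  obtain B where B: "B \<subseteq> ?B0" "fvs.independent B" "?B0 \<subseteq> fvs.span B"
    by (rule fvs.basis_exists[of ?B0])
  have finB: "finite B" using B(1) by (rule finite_subset) (simp add: fin)
  have "fvs.span B \<subseteq> fvs.span ?B0" using B(1) by (rule fvs.span_mono)
  moreover have "fvs.span ?B0 \<subseteq> fvs.span B" by (rule fvs.span_minimal[OF B(3) fvs.subspace_span])
  ultimately have spB: "fvs.span B = ZL1 G" unfolding ZL1_span by (rule subset_antisym)
  have inj: "inj_on (Zop G) (fvs.span B)" using Zop_inj_on spB by simp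
  have indZ: "fvs.independent (Zop G ` B)"
    using module_hom.independent_injective_image[OF Zop_hom B(2) inj] .
  have BZ: "B \<subseteq> ZL1 G" using spB fvs.span_superset by blast
  have ZB: "Zop G ` B \<subseteq> ZL1 G" using BZ Zop_ZL1 by blast
  have injB: "inj_on (Zop G) B" using inj fvs.span_superset inj_on_subset by blast
  have cardZ: "card (Zop G ` B) = card B" using injB by (rule card_image)
  have finZ: "finite (Zop G ` B)" using finB by (rule finite_imageI)
  have "ZL1 G \<subseteq> fvs.span (Zop G ` B)"
  proof
    fix v assume v: "v \<in> ZL1 G"
    show "v \<in> fvs.span (Zop G ` B)"
    proof (rule ccontr)
      assume nv: "v \<notin> fvs.span (Zop G ` B)"
      have vn: "v \<notin> Zop G ` B" using nv fvs.span_base by blast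
      have i: "fvs.independent (insert v (Zop G ` B))"
        by (rule fvs.independent_insertI[OF nv indZ])
      have s: "insert v (Zop G ` B) \<subseteq> fvs.span B" using v ZB spB by blast
      have "card (insert v (Zop G ` B)) \<le> card B"
        using fvs.independent_span_bound[OF finB i s] by (rule conjunct2)
      moreover have "card (insert v (Zop G ` B)) = card B + 1"
        using card_insert_disjoint[OF finZ vn] cardZ by simp
      ultimately show False by simp
    qed
  qed
  also have "fvs.span (Zop G ` B) = Zop G ` fvs.span B"
    by (rule module_hom.span_image[OF Zop_hom])
  finally have "b \<in> Zop G ` ZL1 G" using b spB by blast
  then show ?thesis by blast
qed

end

context fgrp begin

lemma conv_uG_left: assumes "\<And>x. x \<notin> carrier G \<Longrightarrow> f x = 0" shows "conv G (uG G) f = f"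
proof
  fix t show "conv G (uG G) f t = f t"
  proof (cases "t \<in> carrier G")
    case True
    have "(\<Sum>s\<in>carrier G. uG G s * f (inv s \<otimes> t)) = (\<Sum>s\<in>carrier G. if s = \<one> then of_nat n * f t else 0)"
      using True by (intro sum.cong refl) (auto simp: uG_def)
    then show ?thesis using True fin nC_nz by (simp add: conv_def)
  next
    case False then show ?thesis using assms by (simp add: conv_def)
  qed
qed

lemma mtens_out: "t \<notin> carrier G \<Longrightarrow> mtens G \<mu> t = 0"
  by (simp add: mtens_def)

lemma exists_w: obtains w where "w \<in> ZL1 G" "Zop G w = uG G"
  using Zop_surj[OF uG_ZL1] by blast

lemma diag_exists: assumes w: "w \<in> ZL1 G" "Zop G w = uG G"
  shows "bdd_approx_diag G (principal {Pop G w}) (projnorm G (Pop G w))"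
proof -
  have m: "mtens G (Pop G w) = uG G" using w by (simp add: Zop_def)
  have u0: "\<And>x. x \<notin> carrier G \<Longrightarrow> uG G x = 0" using uG_ZL1 by (simp add: ZL1_zero)
  have c1: "conv G (mtens G (Pop G w)) a = a" if "a \<in> ZL1 G" for a
    unfolding m using that by (intro conv_uG_left) (simp add: ZL1_zero)
  have c2: "conv G a (mtens G (Pop G w)) = a" if "a \<in> ZL1 G" for a
    unfolding m using that by (intro conv_uG) (simp add: ZL1_zero)
  have c3: "(\<lambda>z. lact G a (Pop G w) z - ract G (Pop G w) a z) = (\<lambda>z. 0)" if "a \<in> ZL1 G" for a
    using casimir[OF that w(1)] by simp
  have l0: "l1norm G (\<lambda>t. 0) = 0" by (simp add: l1norm_def)
  have ps: "\<And>f :: _ \<Rightarrow> real. f (Pop G w) = 0 \<Longrightarrow> (f \<longlongrightarrow> 0) (principal {Pop G w})"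
    by (metis tendsto_principal_singleton)
  show ?thesis
    unfolding bdd_approx_diag_def
    using Pop_tens[OF w(1)]
    by (auto simp: eventually_principal c1 c2 c3 l0 projnorm_zero principal_eq_bot_iff intro!: ps)
qed

lemma am_set_nonempty: "{C. \<exists>F. bdd_approx_diag G F C} \<noteq> {}"
proof -
  obtain w where "w \<in> ZL1 G" "Zop G w = uG G" by (rule exists_w)
  then show ?thesis using diag_exists by blast
qed

end

context fgrp begin

lemma Zop_dx: assumes w: "w \<in> ZL1 G" "Zop G w = uG G" and x: "x \<in> carrier G"
  shows "Zop G (\<lambda>y. Pop G w (x, y)) = acl G (inv x)"
proof
  fix t show "Zop G (\<lambda>y. Pop G w (x, y)) t = acl G (inv x) t"
  proof (cases "t \<in> carrier G")
    case False then show ?thesis by (simp add: Zop_out acl_def)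
  next
    case t: True
    define A where "A = (\<lambda>(s, g, k). w (k \<otimes> (g \<otimes> (inv s \<otimes> t) \<otimes> inv g \<otimes> s) \<otimes> inv k \<otimes> x))"
    define B where "B = (\<lambda>(s, g, k). w (g \<otimes> (inv s \<otimes> (inv k \<otimes> t \<otimes> k \<otimes> x)) \<otimes> inv g \<otimes> s))"
    define \<phi> where "\<phi> = (\<lambda>(s, g, k). let k' = inv g \<otimes> s \<otimes> inv k in (inv k' \<otimes> s \<otimes> k', inv k' \<otimes> g \<otimes> k', k'))"
    define \<psi> where "\<psi> = (\<lambda>(s', g', k'). (k' \<otimes> s' \<otimes> inv k', k' \<otimes> g' \<otimes> inv k', inv g' \<otimes> s' \<otimes> inv k'))"
    let ?S3 = "carrier G \<times> carrier G \<times> carrier G"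
    have lhs: "Zop G (\<lambda>y. Pop G w (x, y)) t * (of_nat n)^3 = sum A ?S3"
    proof -
      have "Zop G (\<lambda>y. Pop G w (x, y)) t * (of_nat n)^3
          = (\<Sum>s\<in>carrier G. \<Sum>g\<in>carrier G. \<Sum>k\<in>carrier G. w (k \<otimes> (g \<otimes> (inv s \<otimes> t) \<otimes> inv g \<otimes> s) \<otimes> inv k \<otimes> x))"
        using t x nC_nz by (simp add: Zop_in Pop_in sum_divide_distrib[symmetric] power3_eq_cube power2_eq_square)
      also have "\<dots> = sum A ?S3"
        by (simp add: A_def sum.cartesian_product)
      finally show ?thesis .
    qed
    have rhs: "acl G (inv x) t * (of_nat n)^3 = sum B ?S3"
    proof -
      have "acl G (inv x) t * (of_nat n)^3 = (\<Sum>k\<in>carrier G. uG G (inv k \<otimes> t \<otimes> k \<otimes> x) * (of_nat n)^2)"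
      proof -
        have "acl G (inv x) t * (of_nat n)^3 = (\<Sum>k\<in>carrier G. (if k \<otimes> inv x \<otimes> inv k = t then 1 else 0) * (of_nat n)^3)"
          using t by (simp add: acl_def sum_distrib_right)
        also have "\<dots> = (\<Sum>k\<in>carrier G. uG G (inv k \<otimes> t \<otimes> k \<otimes> x) * (of_nat n)^2)"
        proof (rule sum.cong[OF refl])
          fix k assume k: "k \<in> carrier G"
          have "(k \<otimes> inv x \<otimes> inv k = t) = (inv k \<otimes> t \<otimes> k \<otimes> x = \<one>)"
          proof
            assume "k \<otimes> inv x \<otimes> inv k = t" then show "inv k \<otimes> t \<otimes> k \<otimes> x = \<one>" using k x by (auto simp: gs)
          next
            assume e: "inv k \<otimes> t \<otimes> k \<otimes> x = \<one>"
            have "k \<otimes> (inv k \<otimes> t \<otimes> k \<otimes> x) \<otimes> inv x \<otimes> inv k = k \<otimes> \<one> \<otimes> inv x \<otimes> inv k" using e by simp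
            then show "k \<otimes> inv x \<otimes> inv k = t" using k x t by (simp add: gs)
          qed
          then show "(if k \<otimes> inv x \<otimes> inv k = t then 1 else 0) * (of_nat n)^3 = uG G (inv k \<otimes> t \<otimes> k \<otimes> x) * (of_nat n)^2"
            by (simp add: uG_def power3_eq_cube power2_eq_square)
        qed
        finally show ?thesis .
      qed
      also have "\<dots> = (\<Sum>k\<in>carrier G. \<Sum>s\<in>carrier G. \<Sum>g\<in>carrier G. w (g \<otimes> (inv s \<otimes> (inv k \<otimes> t \<otimes> k \<otimes> x)) \<otimes> inv g \<otimes> s))"
      proof (rule sum.cong[OF refl])
        fix k assume k: "k \<in> carrier G"
        have "uG G (inv k \<otimes> t \<otimes> k \<otimes> x) = Zop G w (inv k \<otimes> t \<otimes> k \<otimes> x)" using w by simp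
        then show "uG G (inv k \<otimes> t \<otimes> k \<otimes> x) * (of_nat n)^2 = (\<Sum>s\<in>carrier G. \<Sum>g\<in>carrier G. w (g \<otimes> (inv s \<otimes> (inv k \<otimes> t \<otimes> k \<otimes> x)) \<otimes> inv g \<otimes> s))"
          using k t x nC_nz by (simp add: Zop_in)
      qed
      also have "\<dots> = (\<Sum>s\<in>carrier G. \<Sum>k\<in>carrier G. \<Sum>g\<in>carrier G. w (g \<otimes> (inv s \<otimes> (inv k \<otimes> t \<otimes> k \<otimes> x)) \<otimes> inv g \<otimes> s))"
        by (rule sum.swap)
      also have "\<dots> = (\<Sum>s\<in>carrier G. \<Sum>g\<in>carrier G. \<Sum>k\<in>carrier G. w (g \<otimes> (inv s \<otimes> (inv k \<otimes> t \<otimes> k \<otimes> x)) \<otimes> inv g \<otimes> s))"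
        by (rule sum.cong[OF refl], rule sum.swap)
      also have "\<dots> = sum B ?S3"
        by (simp add: B_def sum.cartesian_product)
      finally show ?thesis .
    qed
    have "sum B ?S3 = sum (\<lambda>p. B (\<phi> p)) ?S3"
    proof (rule sum_bij_self[where k=\<psi>, symmetric])
      fix p assume "p \<in> ?S3"
      then obtain s g k where p: "p = (s, g, k)" and s: "s \<in> carrier G" and g: "g \<in> carrier G" and k: "k \<in> carrier G" by auto
      show "\<phi> p \<in> ?S3" using s g k by (simp add: p \<phi>_def Let_def)
      show "\<psi> p \<in> ?S3" using s g k by (simp add: p \<psi>_def)
      show "\<psi> (\<phi> p) = p" using s g k by (simp add: p \<phi>_def \<psi>_def Let_def gs)
      show "\<phi> (\<psi> p) = p" using s g k by (simp add: p \<phi>_def \<psi>_def Let_def gs)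
    qed
    also have "\<dots> = sum A ?S3"
    proof (rule sum.cong[OF refl])
      fix p assume "p \<in> ?S3"
      then obtain s g k where p: "p = (s, g, k)" and s: "s \<in> carrier G" and g: "g \<in> carrier G" and k: "k \<in> carrier G" by auto
      define k' where "k' = inv g \<otimes> s \<otimes> inv k"
      define g' where "g' = inv k' \<otimes> g \<otimes> k'"
      define s' where "s' = inv k' \<otimes> s \<otimes> k'"
      have k'c: "k' \<in> carrier G" using s g k by (simp add: k'_def)
      have g'c: "g' \<in> carrier G" and s'c: "s' \<in> carrier G" using s g k'c by (simp_all add: g'_def s'_def)
      define XA where "XA = k \<otimes> (g \<otimes> (inv s \<otimes> t) \<otimes> inv g \<otimes> s) \<otimes> inv k \<otimes> x"
      define XB where "XB = g' \<otimes> (inv s' \<otimes> (inv k' \<otimes> t \<otimes> k' \<otimes> x)) \<otimes> inv g' \<otimes> s'"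
      define c0 where "c0 = inv g \<otimes> s \<otimes> inv k \<otimes> x"
      define cp where "cp = k' \<otimes> x \<otimes> inv g' \<otimes> s'"
      define c where "c = inv cp \<otimes> c0"
      have cc: "c \<in> carrier G" using s g k x g'c s'c k'c by (simp add: c_def c0_def cp_def)
      have XAc: "XA \<in> carrier G" using s g k x t by (simp add: XA_def)
      have "XB = c \<otimes> XA \<otimes> inv c"
        unfolding XB_def XA_def c_def c0_def cp_def g'_def s'_def k'_def
        using s g k x t by (simp add: gs)
      then have "w XB = w XA" using ZL1_conj[OF w(1) XAc cc] by simp
      moreover have "\<phi> p = (s', g', k')" by (simp add: p \<phi>_def Let_def k'_def g'_def s'_def)
      ultimately show "B (\<phi> p) = A p" by (simp add: p A_def B_def XA_def XB_def)
    qed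
    finally have "sum B ?S3 = sum A ?S3" .
    then show ?thesis using lhs rhs nC_nz by (metis mult_right_cancel power_not_zero)
  qed
qed

end

context fgrp begin

lemma Zop_zero: "Zop G (\<lambda>t. 0) t = 0"
  by (cases "t \<in> carrier G") (simp_all add: Zop_in Zop_out)

lemma acl_self_nz: assumes c: "c \<in> carrier G" shows "acl G c c \<noteq> 0"
proof -
  have "Re (if \<one> \<otimes> c \<otimes> inv \<one> = c then 1 else (0::complex))
      \<le> (\<Sum>g\<in>carrier G. Re (if g \<otimes> c \<otimes> inv g = c then 1 else (0::complex)))"
    using c fin by (intro member_le_sum) auto
  then have "1 \<le> (\<Sum>g\<in>carrier G. Re (if g \<otimes> c \<otimes> inv g = c then 1 else (0::complex)))"
    using c by simp
  then have "1 \<le> Re (acl G c c)" using c by (simp add: acl_def)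
  then show ?thesis by auto
qed

lemma diag_pos: assumes w: "w \<in> ZL1 G" "Zop G w = uG G" and x: "x \<in> carrier G"
  shows "Pop G w (x, inv x) = of_real (Re (Pop G w (x, inv x)))" "Re (Pop G w (x, inv x)) > 0"
proof -
  let ?d = "\<lambda>y. Pop G w (x, y)"
  have dZ: "?d \<in> ZL1 G" by (rule Pop_slice2)
  obtain q where q: "Qf ?d = of_real q" "q \<ge> 0" "q = 0 \<Longrightarrow> ?d = (\<lambda>t. 0)"
    using Qf_nonneg[OF dZ] by blast
  have "Qf ?d = (\<Sum>t\<in>carrier G. acl G (inv x) t * cnj (?d t))"
    by (simp add: Qf_def Zop_dx[OF w x])
  also have "\<dots> = (\<Sum>g\<in>carrier G. cnj (?d (g \<otimes> inv x \<otimes> inv g)))"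
    using x by (intro acl_fiber) simp
  also have "\<dots> = (\<Sum>g\<in>carrier G. cnj (?d (inv x)))"
    using x by (intro sum.cong refl) (simp add: Pop_class2)
  finally have Qd: "Qf ?d = of_nat n * cnj (?d (inv x))" by simp
  have e: "?d (inv x) = of_real (q / real n)"
  proof -
    have "cnj (?d (inv x)) = of_real q / of_nat n" using Qd q(1) nC_nz by (simp add: field_simps)
    then have "?d (inv x) = cnj (of_real q / of_nat n)" by (metis complex_cnj_cnj)
    then show ?thesis by simp
  qed
  then show "Pop G w (x, inv x) = of_real (Re (Pop G w (x, inv x)))" by simp
  have "q \<noteq> 0"
  proof
    assume "q = 0"
    then have "?d = (\<lambda>t. 0)" by (rule q(3))
    then have "Zop G ?d (inv x) = 0" by (simp add: Zop_zero)
    then show False using Zop_dx[OF w x] acl_self_nz[of "inv x"] x by simp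
  qed
  then have "q > 0" using q(2) by simp
  then show "Re (Pop G w (x, inv x)) > 0" using e n_pos by simp
qed

lemma diag_sum: assumes w: "w \<in> ZL1 G" "Zop G w = uG G"
  shows "(\<Sum>x\<in>carrier G. Pop G w (x, inv x)) = (of_nat n)^2"
proof -
  have "mtens G (Pop G w) \<one> = uG G \<one>" using w by (simp add: Zop_def)
  then have "(\<Sum>x\<in>carrier G. Pop G w (x, inv x \<otimes> \<one>)) / of_nat n = of_nat n"
    by (simp add: mtens_def uG_def)
  then show ?thesis using nC_nz by (simp add: field_simps power2_eq_square)
qed

definition Cl where "Cl x = {y \<in> carrier G. \<exists>k\<in>carrier G. k \<otimes> inv x \<otimes> inv k = y}"

lemma Tf_D: assumes w: "w \<in> ZL1 G" "Zop G w = uG G"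
  shows "Tf G (Pop G w) * (of_nat n)^2 = (\<Sum>x\<in>carrier G. of_nat (card (Cl x)) * Pop G w (x, inv x))"
proof -
  have "(\<Sum>y\<in>carrier G. if (\<exists>k\<in>carrier G. k \<otimes> inv x \<otimes> inv k = y) then Pop G w (x, y) else 0)
      = of_nat (card (Cl x)) * Pop G w (x, inv x)" if x: "x \<in> carrier G" for x
  proof -
    have "(\<Sum>y\<in>carrier G. if (\<exists>k\<in>carrier G. k \<otimes> inv x \<otimes> inv k = y) then Pop G w (x, y) else 0)
        = (\<Sum>y\<in>Cl x. Pop G w (x, y))"
      unfolding Cl_def using fin by (simp add: sum.inter_filter)
    also have "\<dots> = (\<Sum>y\<in>Cl x. Pop G w (x, inv x))"
      using x by (intro sum.cong refl) (auto simp: Cl_def Pop_class2)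
    finally show ?thesis by simp
  qed
  then show ?thesis using nC_nz by (simp add: Tf_def)
qed

lemma Cl_fin: "finite (Cl x)" using fin by (simp add: Cl_def)

lemma Cl_ge1: assumes x: "x \<in> carrier G" shows "card (Cl x) \<ge> 1"
proof -
  have "inv x \<in> Cl x" using x unfolding Cl_def by (auto intro!: bexI[of _ \<one>])
  then show ?thesis using Cl_fin by (metis One_nat_def Suc_leI card_gt_0_iff empty_iff)
qed

lemma Cl_ge2: assumes a: "a \<in> carrier G" and b: "b \<in> carrier G" and ab: "a \<otimes> b \<noteq> b \<otimes> a"
  shows "card (Cl a) \<ge> 2"
proof -
  have ne: "b \<otimes> inv a \<otimes> inv b \<noteq> inv a"
  proof
    assume e: "b \<otimes> inv a \<otimes> inv b = inv a"
    have "inv (b \<otimes> inv a \<otimes> inv b) = inv (inv a)" using e by simp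
    then have "b \<otimes> a \<otimes> inv b = a" using a b by (simp add: gs)
    then have "(b \<otimes> a \<otimes> inv b) \<otimes> b = a \<otimes> b" by simp
    then have "b \<otimes> a = a \<otimes> b" using a b by (simp add: gs)
    then show False using ab by simp
  qed
  have "inv a \<in> Cl a" using a unfolding Cl_def by (auto intro!: bexI[of _ \<one>])
  moreover have "b \<otimes> inv a \<otimes> inv b \<in> Cl a" using a b unfolding Cl_def by (auto intro!: bexI[of _ b])
  ultimately have "{inv a, b \<otimes> inv a \<otimes> inv b} \<subseteq> Cl a" by simp
  then have "card {inv a, b \<otimes> inv a \<otimes> inv b} \<le> card (Cl a)" using Cl_fin by (rule card_mono[rotated])
  then show ?thesis using ne by simp
qed

lemma TfD_gt1: assumes w: "w \<in> ZL1 G" "Zop G w = uG G" and nc: "\<not> comm_group G"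
  shows "Re (Tf G (Pop G w)) > 1"
proof -
  obtain a b where a: "a \<in> carrier G" and b: "b \<in> carrier G" and ab: "a \<otimes> b \<noteq> b \<otimes> a"
    using nc group_comm_groupI by blast
  define r where "r x = Re (Pop G w (x, inv x))" for x
  have rD: "Pop G w (x, inv x) = of_real (r x)" if "x \<in> carrier G" for x
    using diag_pos(1)[OF w that] by (simp add: r_def)
  have rpos: "r x > 0" if "x \<in> carrier G" for x using diag_pos(2)[OF w that] by (simp add: r_def)
  have rs: "(\<Sum>x\<in>carrier G. r x) = (real n)^2"
  proof -
    have "(\<Sum>x\<in>carrier G. of_real (r x) :: complex) = (of_nat n)^2"
      using diag_sum[OF w] rD by (metis (no_types, lifting) sum.cong)
    then have "of_real (\<Sum>x\<in>carrier G. r x) = (of_real ((real n)^2) :: complex)" by simp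
    then show ?thesis by (simp only: of_real_eq_iff)
  qed
  have T: "Re (Tf G (Pop G w)) * (real n)^2 = (\<Sum>x\<in>carrier G. real (card (Cl x)) * r x)"
  proof -
    have "Tf G (Pop G w) * (of_nat n)^2 = of_real (\<Sum>x\<in>carrier G. real (card (Cl x)) * r x)"
      unfolding Tf_D[OF w] by (simp add: rD)
    then have "Re (Tf G (Pop G w) * (of_nat n)^2) = (\<Sum>x\<in>carrier G. real (card (Cl x)) * r x)"
      by (metis Re_complex_of_real)
    then show ?thesis by (simp add: power2_eq_square)
  qed
  have "(\<Sum>x\<in>carrier G. real (card (Cl x)) * r x) - (\<Sum>x\<in>carrier G. r x)
      = (\<Sum>x\<in>carrier G. (real (card (Cl x)) - 1) * r x)"
    by (simp add: sum_subtractf left_diff_distrib)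
  also have "\<dots> \<ge> (real (card (Cl a)) - 1) * r a"
    using a fin Cl_ge1 rpos by (intro member_le_sum) (auto intro!: mult_nonneg_nonneg simp: less_imp_le)
  moreover have "(real (card (Cl a)) - 1) * r a \<ge> r a"
    using Cl_ge2[OF a b ab] rpos[OF a] by (simp add: algebra_simps)
  ultimately have "(\<Sum>x\<in>carrier G. real (card (Cl x)) * r x) \<ge> (real n)^2 + r a" using rs by linarith
  then have "Re (Tf G (Pop G w)) * (real n)^2 > (real n)^2" using T rpos[OF a] by linarith
  then show ?thesis using n_pos by simp
qed

end

context fgrp begin

lemma Pop_diff: "Pop G (\<lambda>t. f t - g t) z = Pop G f z - Pop G g z"
  by (cases z) (simp add: Pop_def sum_subtractf diff_divide_distrib)

lemma Pop_lin: "Pop G (\<lambda>t. \<Sum>c\<in>A. a c * W c t) z = (\<Sum>c\<in>A. a c * Pop G (W c) z)"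
proof (cases z)
  case (Pair x y)
  show ?thesis
  proof (cases "x \<in> carrier G \<and> y \<in> carrier G")
    case True then show ?thesis
      by (simp add: Pair Pop_def sum_distrib_left sum_divide_distrib sum.swap[of _ A] mult_ac)
  next
    case False then show ?thesis by (auto simp: Pair Pop_def)
  qed
qed

definition ind where "ind x y = (if (\<exists>k\<in>carrier G. k \<otimes> inv x \<otimes> inv k = y) then (1::complex) else 0)"

lemma ind_bound: "cmod (ind x y) \<le> 1" by (simp add: ind_def)

lemma Tf_alt: "Tf G \<mu> = (\<Sum>x\<in>carrier G. \<Sum>y\<in>carrier G. ind x y * \<mu> (x, y)) / (of_nat n)^2"
  unfolding Tf_def ind_def by (simp add: if_distrib[of "\<lambda>v. v * _"] cong: if_cong)

lemma Tf_diff: "Tf G (\<lambda>z. M z - N z) = Tf G M - Tf G N"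
  by (simp add: Tf_alt right_diff_distrib sum_subtractf diff_divide_distrib)

lemma Tf_lin: "Tf G (\<lambda>z. \<Sum>c\<in>A. a c * M c z) = (\<Sum>c\<in>A. a c * Tf G (M c))"
proof -
  have "(\<Sum>x\<in>carrier G. \<Sum>y\<in>carrier G. ind x y * (\<Sum>c\<in>A. a c * M c (x, y)))
      = (\<Sum>x\<in>carrier G. \<Sum>c\<in>A. \<Sum>y\<in>carrier G. a c * (ind x y * M c (x, y)))"
    by (intro sum.cong refl) (simp add: sum_distrib_left sum.swap[of _ A] mult_ac)
  also have "\<dots> = (\<Sum>c\<in>A. \<Sum>x\<in>carrier G. \<Sum>y\<in>carrier G. a c * (ind x y * M c (x, y)))"
    by (rule sum.swap)
  also have "\<dots> = (\<Sum>c\<in>A. a c * (\<Sum>x\<in>carrier G. \<Sum>y\<in>carrier G. ind x y * M c (x, y)))"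
    by (simp add: sum_distrib_left)
  finally have e: "(\<Sum>x\<in>carrier G. \<Sum>y\<in>carrier G. ind x y * (\<Sum>c\<in>A. a c * M c (x, y)))
      = (\<Sum>c\<in>A. a c * (\<Sum>x\<in>carrier G. \<Sum>y\<in>carrier G. ind x y * M c (x, y)))" .
  show ?thesis unfolding Tf_alt e by (simp only: sum_divide_distrib[of _ A] times_divide_eq_right)
qed

lemma Tf_bound: "\<mu> \<in> ZL1_tens G \<Longrightarrow> cmod (Tf G \<mu>) \<le> projnorm G \<mu>"
  unfolding Tf_alt by (rule functional_bound) (auto simp: ind_bound)

lemma mtens_add: "mtens G (\<lambda>z. M z + N z) t = mtens G M t + mtens G N t"
  by (simp add: mtens_def sum.distrib add_divide_distrib)

lemma ZL1_lin: "(\<And>c. c \<in> A \<Longrightarrow> W c \<in> ZL1 G) \<Longrightarrow> (\<lambda>t. \<Sum>c\<in>A. a c * W c t) \<in> ZL1 G"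
  by (auto simp: ZL1_def intro!: sum.neutral sum.cong)

lemma TP_repr:
  assumes W: "\<And>c. c \<in> carrier G \<Longrightarrow> W c \<in> ZL1 G \<and> Zop G (W c) = (\<lambda>x. acl G c x / of_nat n)"
    and d: "\<delta> \<in> ZL1 G"
  shows "Tf G (Pop G \<delta>) = (\<Sum>c\<in>carrier G. Zop G \<delta> c * Tf G (Pop G (W c)))"
proof -
  define \<delta>' where "\<delta>' = (\<lambda>t. \<Sum>c\<in>carrier G. Zop G \<delta> c * W c t)"
  have d'Z: "\<delta>' \<in> ZL1 G" unfolding \<delta>'_def using W by (intro ZL1_lin) auto
  have "Zop G \<delta>' = Zop G \<delta>"
  proof
    fix t show "Zop G \<delta>' t = Zop G \<delta> t"
    proof (cases "t \<in> carrier G")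
      case True
      have "Zop G \<delta>' t = (\<Sum>c\<in>carrier G. Zop G \<delta> c * (acl G c t / of_nat n))"
        unfolding \<delta>'_def Zop_lin using W by (intro sum.cong refl) simp
      also have "\<dots> = (\<Sum>c\<in>carrier G. acl G c t * Zop G \<delta> c) / of_nat n"
        by (simp add: sum_divide_distrib mult_ac)
      also have "\<dots> = Zop G \<delta> t"
        using class_expand[OF Zop_ZL1[OF d] True] nC_nz by simp
      finally show ?thesis .
    next
      case False then show ?thesis by (simp add: Zop_out)
    qed
  qed
  then have "\<delta>' = \<delta>" using Zop_inj_on d'Z d by (auto dest: inj_onD)
  then have "Tf G (Pop G \<delta>) = Tf G (Pop G \<delta>')" by simp
  also have "\<dots> = Tf G (\<lambda>z. \<Sum>c\<in>carrier G. Zop G \<delta> c * Pop G (W c) z)"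
    unfolding \<delta>'_def Pop_lin ..
  also have "\<dots> = (\<Sum>c\<in>carrier G. Zop G \<delta> c * Tf G (Pop G (W c)))"
    by (rule Tf_lin)
  finally show ?thesis .
qed

end

context fgrp begin

lemma main_bound:
  assumes w: "w \<in> ZL1 G" "Zop G w = uG G"
    and W: "\<And>c. c \<in> carrier G \<Longrightarrow> W c \<in> ZL1 G \<and> Zop G (W c) = (\<lambda>x. acl G c x / of_nat n)"
    and mu: "\<mu> \<in> ZL1_tens G"
  shows "Re (Tf G (Pop G w)) - (((real n)^2 + real n) * (\<Sum>c\<in>carrier G. cmod (Tf G (Pop G (W c)))) + (real n)^2)
      * ((\<Sum>c\<in>carrier G. projnorm G (\<lambda>z. lact G (acl G c) \<mu> z - ract G \<mu> (acl G c) z))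
         + l1norm G (\<lambda>t. mtens G \<mu> t - uG G t)) \<le> projnorm G \<mu>"
proof -
  define \<nu> where "\<nu> c = (\<lambda>z. lact G (acl G c) \<mu> z - ract G \<mu> (acl G c) z)" for c
  define \<epsilon> where "\<epsilon> = (\<Sum>c\<in>carrier G. projnorm G (\<nu> c)) + l1norm G (\<lambda>t. mtens G \<mu> t - uG G t)"
  define \<sigma> where "\<sigma> c = Tf G (Pop G (W c))" for c
  define K where "K = ((real n)^2 + real n) * (\<Sum>c\<in>carrier G. cmod (\<sigma> c)) + (real n)^2"
  have \<nu>T: "\<nu> c \<in> ZL1_tens G" if "c \<in> carrier G" for c
    unfolding \<nu>_def by (rule comm_tens[OF acl_ZL1[OF that] mu])
  have pn0: "0 \<le> projnorm G (\<nu> c)" if "c \<in> carrier G" for c using projnorm_nonneg[OF \<nu>T[OF that]] .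
  have sum0: "0 \<le> (\<Sum>c\<in>carrier G. projnorm G (\<nu> c))" using pn0 by (simp add: sum_nonneg)
  have pn: "projnorm G (\<nu> c) \<le> \<epsilon>" if c: "c \<in> carrier G" for c
  proof -
    have "projnorm G (\<nu> c) \<le> (\<Sum>c\<in>carrier G. projnorm G (\<nu> c))"
      using c fin pn0 by (intro member_le_sum) auto
    then show ?thesis using l1norm_nonneg[of "\<lambda>t. mtens G \<mu> t - uG G t"] by (simp add: \<epsilon>_def)
  qed
  have l1e: "l1norm G (\<lambda>t. mtens G \<mu> t - uG G t) \<le> \<epsilon>" using sum0 by (simp add: \<epsilon>_def)
  have e0: "0 \<le> \<epsilon>" using sum0 l1norm_nonneg by (simp add: \<epsilon>_def)
  define h where "h = (\<lambda>t. \<mu> (t, \<one>))"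
  have hZ: "h \<in> ZL1 G" unfolding h_def by (rule tens_slice1[OF mu])
  define E where "E = (\<lambda>(x, y). if x \<in> carrier G \<and> y \<in> carrier G then \<nu> (inv y) (x, \<one>) else 0)"
  have Eb: "cmod (E z) \<le> (real n)^2 * \<epsilon>" for z
  proof (cases z)
    case (Pair x y)
    show ?thesis
    proof (cases "x \<in> carrier G \<and> y \<in> carrier G")
      case True
      then have iy: "inv y \<in> carrier G" by simp
      have "cmod (\<nu> (inv y) (x, \<one>)) \<le> (real n)^2 * projnorm G (\<nu> (inv y))"
        using True by (intro point_bound \<nu>T iy) auto
      also have "\<dots> \<le> (real n)^2 * \<epsilon>" using pn[OF iy] by (intro mult_left_mono) auto
      finally show ?thesis using True by (simp add: Pair E_def)
    next
      case False then show ?thesis using e0 by (auto simp: Pair E_def)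
    qed
  qed
  have muE: "\<mu> = (\<lambda>z. Pop G h z - E z)"
  proof
    fix z show "\<mu> z = Pop G h z - E z"
    proof (cases z)
      case (Pair x y)
      show ?thesis
      proof (cases "x \<in> carrier G \<and> y \<in> carrier G")
        case True
        then show ?thesis using decomp[OF mu, of x y] by (simp add: Pair E_def \<nu>_def h_def)
      next
        case False then show ?thesis using tens_zero[OF mu] by (auto simp: Pair E_def Pop_out)
      qed
    qed
  qed
  have PopE: "Pop G h = (\<lambda>z. \<mu> z + E z)"
    using muE by (auto simp: fun_eq_iff dest: fun_cong)
  define \<delta> where "\<delta> = (\<lambda>t. h t - w t)"
  have dZ: "\<delta> \<in> ZL1 G" using hZ w(1) by (auto simp: \<delta>_def ZL1_def)
  have T1: "Tf G \<mu> = Tf G (Pop G h) - Tf G E"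
    using arg_cong[where f="Tf G", OF muE] Tf_diff by simp
  have Pd: "Pop G \<delta> = (\<lambda>z. Pop G h z - Pop G w z)" unfolding \<delta>_def by (rule ext, rule Pop_diff)
  have T2: "Tf G (Pop G \<delta>) = Tf G (Pop G h) - Tf G (Pop G w)" unfolding Pd by (rule Tf_diff)
  have T3: "Tf G (Pop G \<delta>) = (\<Sum>c\<in>carrier G. Zop G \<delta> c * \<sigma> c)"
    unfolding \<sigma>_def by (rule TP_repr[OF W dZ])
  have mEb: "cmod (mtens G E c) \<le> (real n)^2 * \<epsilon>" if c: "c \<in> carrier G" for c
  proof -
    have "cmod (\<Sum>s\<in>carrier G. E (s, inv s \<otimes> c)) \<le> (\<Sum>s\<in>carrier G. (real n)^2 * \<epsilon>)"
      by (rule order_trans[OF norm_sum sum_mono]) (rule Eb)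
    then have "cmod (\<Sum>s\<in>carrier G. E (s, inv s \<otimes> c)) \<le> real n * ((real n)^2 * \<epsilon>)" by simp
    then show ?thesis using c n_pos by (simp add: mtens_def norm_divide field_simps)
  qed
  have mub: "cmod (mtens G \<mu> c - uG G c) \<le> real n * \<epsilon>" if c: "c \<in> carrier G" for c
  proof -
    have "cmod (mtens G \<mu> c - uG G c) \<le> (\<Sum>t\<in>carrier G. cmod (mtens G \<mu> t - uG G t))"
      using c fin by (intro member_le_sum) auto
    also have "\<dots> = real n * l1norm G (\<lambda>t. mtens G \<mu> t - uG G t)" by (rule l1norm_sum)
    also have "\<dots> \<le> real n * \<epsilon>" using l1e by (intro mult_left_mono) auto
    finally show ?thesis .
  qed
  have Zdb: "cmod (Zop G \<delta> c) \<le> ((real n)^2 + real n) * \<epsilon>" if c: "c \<in> carrier G" for c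
  proof -
    have "Zop G \<delta> c = Zop G h c - Zop G w c" unfolding \<delta>_def by (rule Zop_diff)
    also have "Zop G h c = mtens G \<mu> c + mtens G E c" unfolding Zop_def PopE by (rule mtens_add)
    finally have "Zop G \<delta> c = (mtens G \<mu> c - uG G c) + mtens G E c" using w(2) by simp
    then have "cmod (Zop G \<delta> c) \<le> cmod (mtens G \<mu> c - uG G c) + cmod (mtens G E c)"
      by (simp add: norm_triangle_ineq)
    then show ?thesis using mub[OF c] mEb[OF c] by (simp add: algebra_simps)
  qed
  have TEb: "cmod (Tf G E) \<le> (real n)^2 * \<epsilon>"
  proof -
    have "cmod (\<Sum>x\<in>carrier G. \<Sum>y\<in>carrier G. ind x y * E (x, y)) \<le> (\<Sum>x\<in>carrier G. \<Sum>y\<in>carrier G. (real n)^2 * \<epsilon>)"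
      by (rule order_trans[OF norm_sum sum_mono], rule order_trans[OF norm_sum sum_mono])
        (auto simp: norm_mult intro: order_trans[OF mult_left_le_one_le[OF _ _ ind_bound] Eb])
    then have "cmod (\<Sum>x\<in>carrier G. \<Sum>y\<in>carrier G. ind x y * E (x, y)) \<le> (real n)^2 * ((real n)^2 * \<epsilon>)"
      by (simp add: power2_eq_square mult_ac)
    then show ?thesis using n_pos by (simp add: Tf_alt norm_divide norm_power field_simps)
  qed
  have Tdb: "cmod (Tf G (Pop G \<delta>)) \<le> ((real n)^2 + real n) * (\<Sum>c\<in>carrier G. cmod (\<sigma> c)) * \<epsilon>"
  proof -
    have "cmod (Tf G (Pop G \<delta>)) \<le> (\<Sum>c\<in>carrier G. cmod (Zop G \<delta> c) * cmod (\<sigma> c))"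
      unfolding T3 by (rule order_trans[OF norm_sum]) (simp add: norm_mult)
    also have "\<dots> \<le> (\<Sum>c\<in>carrier G. ((real n)^2 + real n) * \<epsilon> * cmod (\<sigma> c))"
      by (intro sum_mono mult_right_mono Zdb) auto
    also have "\<dots> = ((real n)^2 + real n) * (\<Sum>c\<in>carrier G. cmod (\<sigma> c)) * \<epsilon>"
      by (simp add: sum_distrib_left sum_distrib_right mult_ac)
    finally show ?thesis .
  qed
  have "Tf G \<mu> = Tf G (Pop G w) + Tf G (Pop G \<delta>) - Tf G E" using T1 T2 by simp
  then have "Re (Tf G \<mu>) = Re (Tf G (Pop G w)) + Re (Tf G (Pop G \<delta>)) - Re (Tf G E)" by simp
  moreover have "- cmod (Tf G (Pop G \<delta>)) \<le> Re (Tf G (Pop G \<delta>))" using abs_Re_le_cmod[of "Tf G (Pop G \<delta>)"] by linarith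
  moreover have "Re (Tf G E) \<le> cmod (Tf G E)" by (rule complex_Re_le_cmod)
  moreover have "Re (Tf G \<mu>) \<le> projnorm G \<mu>" using complex_Re_le_cmod Tf_bound[OF mu] order_trans by blast
  ultimately have "Re (Tf G (Pop G w)) - K * \<epsilon> \<le> projnorm G \<mu>"
    using Tdb TEb by (simp add: K_def algebra_simps)
  then show ?thesis by (simp add: K_def \<epsilon>_def \<nu>_def \<sigma>_def)
qed

end

context fgrp begin

lemma lower_bound:
  assumes w: "w \<in> ZL1 G" "Zop G w = uG G"
    and W: "\<And>c. c \<in> carrier G \<Longrightarrow> W c \<in> ZL1 G \<and> Zop G (W c) = (\<lambda>x. acl G c x / of_nat n)"
    and D: "bdd_approx_diag G F C"
  shows "Re (Tf G (Pop G w)) \<le> C"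
proof (rule ccontr)
  assume "\<not> Re (Tf G (Pop G w)) \<le> C"
  then have lt: "C < Re (Tf G (Pop G w))" by simp
  define c0 where "c0 = Re (Tf G (Pop G w))"
  define K where "K = ((real n)^2 + real n) * (\<Sum>c\<in>carrier G. cmod (Tf G (Pop G (W c)))) + (real n)^2"
  define \<epsilon> where "\<epsilon> \<mu> = (\<Sum>c\<in>carrier G. projnorm G (\<lambda>z. lact G (acl G c) \<mu> z - ract G \<mu> (acl G c) z))
         + l1norm G (\<lambda>t. mtens G \<mu> t - uG G t)" for \<mu>
  have K0: "K \<ge> 0" unfolding K_def by (intro add_nonneg_nonneg mult_nonneg_nonneg sum_nonneg) auto
  have Fnb: "F \<noteq> bot" and ev: "\<forall>\<^sub>F \<mu> in F. \<mu> \<in> ZL1_tens G \<and> projnorm G \<mu> \<le> C"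
    using D by (auto simp: bdd_approx_diag_def)
  have t1: "((\<lambda>\<mu>. l1norm G (\<lambda>t. mtens G \<mu> t - uG G t)) \<longlongrightarrow> 0) F"
  proof -
    have "((\<lambda>\<mu>. l1norm G (\<lambda>t. conv G (mtens G \<mu>) (uG G) t - uG G t)) \<longlongrightarrow> 0) F"
      using D uG_ZL1 by (auto simp: bdd_approx_diag_def)
    moreover have "conv G (mtens G \<mu>) (uG G) = mtens G \<mu>" for \<mu>
      by (rule conv_uG) (simp add: mtens_out)
    ultimately show ?thesis by simp
  qed
  have t3: "((\<lambda>\<mu>. projnorm G (\<lambda>z. lact G (acl G c) \<mu> z - ract G \<mu> (acl G c) z)) \<longlongrightarrow> 0) F"
    if "c \<in> carrier G" for c
    using D acl_ZL1[OF that] by (auto simp: bdd_approx_diag_def)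
  have "(\<epsilon> \<longlongrightarrow> 0 + 0) F"
    unfolding \<epsilon>_def by (intro tendsto_add t1 tendsto_null_sum t3)
  then have te: "(\<epsilon> \<longlongrightarrow> 0) F" by simp
  define \<eta> where "\<eta> = (c0 - C) / (K + 1)"
  have eta0: "\<eta> > 0" using lt K0 by (simp add: \<eta>_def c0_def)
  have "\<forall>\<^sub>F \<mu> in F. \<epsilon> \<mu> < \<eta>" using order_tendstoD(2)[OF te eta0] .
  then have "\<forall>\<^sub>F \<mu> in F. False"
  proof (rule eventually_mono[OF eventually_conj[OF ev]])
    fix \<mu> assume a: "(\<mu> \<in> ZL1_tens G \<and> projnorm G \<mu> \<le> C) \<and> \<epsilon> \<mu> < \<eta>"
    have "c0 - K * \<epsilon> \<mu> \<le> projnorm G \<mu>"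
      using main_bound[OF w W] a by (simp add: c0_def K_def \<epsilon>_def)
    moreover have "K * \<epsilon> \<mu> \<le> K * \<eta>" using a K0 by (intro mult_left_mono) auto
    moreover have "K * \<eta> < c0 - C"
    proof -
      have "K * \<eta> < (K + 1) * \<eta>" using eta0 by (simp add: algebra_simps)
      also have "\<dots> = c0 - C" using K0 by (simp add: \<eta>_def)
      finally show ?thesis .
    qed
    ultimately show False using a by linarith
  qed
  then show False using Fnb by (simp add: eventually_False)
qed

theorem am_gt1: assumes nc: "\<not> comm_group G" shows "am_ZL1 G > 1"
proof -
  obtain w where w: "w \<in> ZL1 G" "Zop G w = uG G" by (rule exists_w)
  have "\<forall>c\<in>carrier G. \<exists>V\<in>ZL1 G. Zop G V = (\<lambda>x. acl G c x / of_nat n)"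
    using Zop_surj div_ZL1 acl_ZL1 by blast
  then obtain W where W: "\<And>c. c \<in> carrier G \<Longrightarrow> W c \<in> ZL1 G \<and> Zop G (W c) = (\<lambda>x. acl G c x / of_nat n)"
    by metis
  have "Re (Tf G (Pop G w)) \<le> am_ZL1 G"
    unfolding am_ZL1_def using am_set_nonempty lower_bound[OF w W]
    by (intro cInf_greatest) auto
  then show ?thesis using TfD_gt1[OF w nc] by linarith
qed

end

theorem corollary1p9:
  fixes G :: "('a, 'b) monoid_scheme"
  assumes "group G" and "finite (carrier G)" and "\<not> comm_group G"
  shows "am_ZL1 G > 1"
proof -
  interpret fgrp G using assms by (simp add: fgrp_def fgrp_axioms_def)
  show ?thesis using assms(3) by (rule am_gt1)
qed


end
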